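(* Let $p\in\{0\}\cup[1,\infty)$ and let $A$ be a nonempty subset of $L^p(E)$. Then $A$ is $p$-Choquet decomposable if and only if $A$ is decomposable and strongly closed, i.e. $A=\operatorname{cl}_p A$.
   Context: $E$ is a separable Banach space with Borel $\sigma$-algebra $\mathcal B(E)$ and dual $E^*$; $(\Omega,\mathcal F,\mathbb P)$ is a complete probability space. $L^0(E)$ is the set of a.s.-classes of $E$-valued random variables, $L^p(E)=\{\xi\in L^0(E):\mathbb E|\xi|^p<\infty\}$ for $p\ge1$. $\operatorname{cl}_p$ denotes closure in the norm topology of $L^p(E)$ for $p\geq 1$ and in the topology of convergence in probability for $p=0$ ("strong closure"). $A$ is decomposable if $1_B\xi+1_{B^c}\zeta\in A$ for all $\xi,\zeta\in A$, $B\in\mathcal F$; $\operatorname{dec}A$ is the smallest decomposable set containing $A$ (all finite decompositions $\sum_{i=1}^m 1_{B_i}\xi_i$, $\xi_i\in A$, $(B_i)$ a measurable partition). A closed random set is a closed-valued multifunction $X:\Omega\to\mathcal P(E)$ that is Effros measurable ($\{\omega: X(\omega)\cap U\neq\emptyset\}\in\mathcal F$ for open $U$); $L^p(X)$ is the set of $\xi\in L^p(E)$ with $\xi(\omega)\in X(\omega)$ a.s. For nonempty $A\subseteq L^p(E)$, $F_A$ denotes the a.s. unique closed random set with $\operatorname{cl}_p\operatorname{dec}A=L^p(F_A)$. A transition probability kernel $K$ from $(\Omega,\mathcal F)$ to $(E,\mathcal B(E))$ has a barycenter in $L^p(E)$ if there is $Y\in L^p(E)$ with $L\circ Y=\int_E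 L(x)\,K(\cdot,dx)$ a.s. for every $L\in E^*$; $Y$ is denoted $r(K)=\int_E x\,K(dx)$. $\mathcal K_p(A)$ is the set of regular Borel transition probability kernels $K$ with $K(\omega,F_A(\omega))=1$ for a.e. $\omega$ that have a barycenter in $L^p(E)$; $\mathcal K^\delta_p(A)$ is the set of $K\in\mathcal K_p(A)$ such that $K(\omega)$ is a Dirac measure for a.e. $\omega$. $A\subseteq L^p(E)$ is $p$-Choquet decomposable if $r(K)\in A$ for every $K\in\mathcal K^\delta_p(A)$. *)

theory Defs
  imports "HOL-Probability.Probability"
begin

text \<open>Random variables are represented by functions; a set of a.s.-classes is
represented by a set of functions, and all membership / equality tests between
classes are made modulo a.s. equality.\<close>

definition ae_eq :: "'w measure \<Rightarrow> ('w \<Rightarrow> 'e) \<Rightarrow> ('w \<Rightarrow> 'e) \<Rightarrow> bool" where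
  "ae_eq M f g \<longleftrightarrow> (AE \<omega> in M. f \<omega> = g \<omega>)"

definition ae_mem :: "'w measure \<Rightarrow> ('w \<Rightarrow> 'e) \<Rightarrow> ('w \<Rightarrow> 'e) set \<Rightarrow> bool" where
  "ae_mem M f A \<longleftrightarrow> (\<exists>g\<in>A. ae_eq M f g)"

definition Lp :: "'w measure \<Rightarrow> real \<Rightarrow> ('w \<Rightarrow> 'e::{banach,second_countable_topology}) set" where
  "Lp M p = {\<xi>. \<xi> \<in> borel_measurable M \<and>
      (p = 0 \<or> integrable M (\<lambda>\<omega>. norm (\<xi> \<omega>) powr p))}"

definition conv_p :: "'w measure \<Rightarrow> real \<Rightarrow> (nat \<Rightarrow> 'w \<Rightarrow> 'e::{banach,second_countable_topology})
    \<Rightarrow> ('w \<Rightarrow> 'e) \<Rightarrow> bool" where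
  "conv_p M p X \<xi> \<longleftrightarrow>
    (if p = 0 then (\<forall>\<epsilon>>0. (\<lambda>n. measure M {\<omega>\<in>space M. norm (X n \<omega> - \<xi> \<omega>) > \<epsilon>}) \<longlonglongrightarrow> 0)
     else (\<lambda>n. integral\<^sup>L M (\<lambda>\<omega>. norm (X n \<omega> - \<xi> \<omega>) powr p)) \<longlonglongrightarrow> 0)"

text \<open>strong closure cl_p (both topologies are metrizable, so the closure is the
sequential closure)\<close>
definition clp :: "'w measure \<Rightarrow> real \<Rightarrow> ('w \<Rightarrow> 'e::{banach,second_countable_topology}) set
    \<Rightarrow> ('w \<Rightarrow> 'e) set" where
  "clp M p A = {\<xi>\<in>Lp M p. \<exists>X. (\<forall>n. X n \<in> A) \<and> conv_p M p X \<xi>}"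

definition decomposable :: "'w measure \<Rightarrow> ('w \<Rightarrow> 'e::real_vector) set \<Rightarrow> bool" where
  "decomposable M A \<longleftrightarrow> (\<forall>\<xi>\<in>A. \<forall>\<zeta>\<in>A. \<forall>B\<in>sets M.
      ae_mem M (\<lambda>\<omega>. indicator B \<omega> *\<^sub>R \<xi> \<omega> + indicator (space M - B) \<omega> *\<^sub>R \<zeta> \<omega>) A)"

definition dec :: "'w measure \<Rightarrow> ('w \<Rightarrow> 'e::real_vector) set \<Rightarrow> ('w \<Rightarrow> 'e) set" where
  "dec M A = {\<eta>. \<exists>(m::nat) (\<xi>::nat \<Rightarrow> 'w \<Rightarrow> 'e) (B::nat \<Rightarrow> 'w set).
      (\<forall>i<m. \<xi> i \<in> A \<and> B i \<in> sets M) \<and> disjoint_family_on B {..<m} \<and>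
      (\<Union>i<m. B i) = space M \<and>
      \<eta> = (\<lambda>\<omega>. \<Sum>i<m. indicator (B i) \<omega> *\<^sub>R \<xi> i \<omega>)}"

definition closed_random_set :: "'w measure \<Rightarrow> ('w \<Rightarrow> 'e::topological_space set) \<Rightarrow> bool" where
  "closed_random_set M X \<longleftrightarrow> (\<forall>\<omega>\<in>space M. closed (X \<omega>)) \<and>
      (\<forall>U. open U \<longrightarrow> {\<omega>\<in>space M. X \<omega> \<inter> U \<noteq> {}} \<in> sets M)"

definition Lp_sel :: "'w measure \<Rightarrow> real \<Rightarrow> ('w \<Rightarrow> 'e::{banach,second_countable_topology} set)
    \<Rightarrow> ('w \<Rightarrow> 'e) set" where
  "Lp_sel M p X = {\<xi>\<in>Lp M p. AE \<omega> in M. \<xi> \<omega> \<in> X \<omega>}"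

definition barycenter :: "'w measure \<Rightarrow> real \<Rightarrow> ('w \<Rightarrow> 'e::{banach,second_countable_topology} measure)
    \<Rightarrow> ('w \<Rightarrow> 'e) \<Rightarrow> bool" where
  "barycenter M p K Y \<longleftrightarrow> Y \<in> Lp M p \<and>
     (\<forall>L::'e \<Rightarrow> real. bounded_linear L \<longrightarrow>
        (AE \<omega> in M. integrable (K \<omega>) L \<and> L (Y \<omega>) = integral\<^sup>L (K \<omega>) L))"

definition Kdelta :: "'w measure \<Rightarrow> real \<Rightarrow> ('w \<Rightarrow> 'e::{banach,second_countable_topology} set)
    \<Rightarrow> ('w \<Rightarrow> 'e measure) set" where
  "Kdelta M p F = {K. K \<in> M \<rightarrow>\<^sub>M prob_algebra borel \<and>
      (AE \<omega> in M. emeasure (K \<omega>) (F \<omega>) = 1) \<and>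
      (\<exists>Y. barycenter M p K Y) \<and>
      (AE \<omega> in M. \<exists>x. K \<omega> = return borel x)}"

text \<open>F_A is the a.s. unique closed random set with cl_p dec A = L^p(F_A); since it is
a.s. unique, we quantify over all such F.\<close>
definition is_FA :: "'w measure \<Rightarrow> real \<Rightarrow> ('w \<Rightarrow> 'e::{banach,second_countable_topology}) set
    \<Rightarrow> ('w \<Rightarrow> 'e set) \<Rightarrow> bool" where
  "is_FA M p A F \<longleftrightarrow> closed_random_set M F \<and> clp M p (dec M A) = Lp_sel M p F"

definition choquet_decomposable :: "'w measure \<Rightarrow> real
    \<Rightarrow> ('w \<Rightarrow> 'e::{banach,second_countable_topology}) set \<Rightarrow> bool" where
  "choquet_decomposable M p A \<longleftrightarrow>
     (\<forall>F. is_FA M p A F \<longrightarrow> (\<forall>K\<in>Kdelta M p F. \<forall>Y. barycenter M p K Y \<longrightarrow> ae_mem M Y A))"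

definition strongly_closed :: "'w measure \<Rightarrow> real
    \<Rightarrow> ('w \<Rightarrow> 'e::{banach,second_countable_topology}) set \<Rightarrow> bool" where
  "strongly_closed M p A \<longleftrightarrow> (\<forall>\<xi>\<in>A. ae_mem M \<xi> (clp M p A)) \<and> (\<forall>\<xi>\<in>clp M p A. ae_mem M \<xi> A)"

end

theory Submission
  imports Defs
begin

lemma powr_add_le:
  fixes a b p :: real
  assumes "a \<ge> 0" "b \<ge> 0" "p \<ge> 0"
  shows "(a+b) powr p \<le> 2 powr p * (a powr p + b powr p)"
proof -
  have "(a+b) powr p \<le> (2 * max a b) powr p"
    using assms by (intro powr_mono2) auto
  also have "\<dots> = 2 powr p * (max a b) powr p"
    using assms by (simp add: powr_mult)
  also have "(max a b) powr p \<le> a powr p + b powr p"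
    by (cases "a \<le> b") (auto simp: max_def)
  then have "2 powr p * (max a b) powr p \<le> 2 powr p * (a powr p + b powr p)"
    by (intro mult_left_mono) auto
  finally show ?thesis .
qed

locale setting = prob_space M for M :: "'w measure" +
  fixes p :: real
  assumes cmpl: "complete_measure M" and pp: "p = 0 \<or> p \<ge> 1"
begin

lemma meas_ae:
  fixes f g :: "'w \<Rightarrow> 'e::{banach,second_countable_topology}"
  assumes f: "f \<in> borel_measurable M" and ae: "AE x in M. f x = g x"
  shows "g \<in> borel_measurable M"
proof (rule borel_measurableI)
  fix S :: "'e set" assume S: "open S"
  have fs: "f -` S \<inter> space M \<in> sets M" using f S by (simp add: measurable_sets borel_open)
  have "AE x in M. x \<in> f -` S \<inter> space M \<longleftrightarrow> x \<in> g -` S \<inter> space M"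
    using ae AE_space by eventually_elim auto
  then show "g -` S \<inter> space M \<in> sets M"
    by (rule complete_measure.in_sets_AE[OF cmpl _ fs]) auto
qed

lemma Lp_ae:
  fixes f g :: "'w \<Rightarrow> 'e::{banach,second_countable_topology}"
  assumes f: "f \<in> Lp M p" and ae: "AE x in M. f x = g x"
  shows "g \<in> Lp M p"
proof -
  have fm: "f \<in> borel_measurable M" using f by (simp add: Lp_def)
  have gm: "g \<in> borel_measurable M" using meas_ae[OF fm ae] .
  have "p = 0 \<or> integrable M (\<lambda>\<omega>. norm (f \<omega>) powr p)" using f by (simp add: Lp_def)
  moreover have "AE x in M. norm (f x) powr p = norm (g x) powr p" using ae by eventually_elim simp
  ultimately have "p = 0 \<or> integrable M (\<lambda>\<omega>. norm (g \<omega>) powr p)"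
    using gm by (auto intro: integrable_cong_AE_imp)
  then show ?thesis using gm by (simp add: Lp_def)
qed

lemma Lp_meas: "f \<in> Lp M p \<Longrightarrow> f \<in> borel_measurable M"
  by (simp add: Lp_def)

lemma Lp_int: "f \<in> Lp M p \<Longrightarrow> p \<noteq> 0 \<Longrightarrow> integrable M (\<lambda>\<omega>. norm (f \<omega>) powr p)"
  by (simp add: Lp_def)

lemma Lp_I:
  fixes g :: "'w \<Rightarrow> 'e::{banach,second_countable_topology}"
  assumes g: "g \<in> borel_measurable M" and h: "p \<noteq> 0 \<Longrightarrow> integrable M h"
    and bd: "\<And>\<omega>. \<omega> \<in> space M \<Longrightarrow> norm (g \<omega>) powr p \<le> h \<omega>"
  shows "g \<in> Lp M p"
proof -
  have "integrable M (\<lambda>\<omega>. norm (g \<omega>) powr p)" if "p \<noteq> 0"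
  proof (rule Bochner_Integration.integrable_bound[OF h[OF that]])
    show "(\<lambda>\<omega>. norm (g \<omega>) powr p) \<in> borel_measurable M" using g by measurable
    show "AE x in M. norm (norm (g x) powr p) \<le> norm (h x)"
      using bd by (intro AE_I2) (auto intro: order_trans[OF _ abs_ge_self])
  qed
  then show ?thesis using g by (auto simp: Lp_def)
qed

lemma Lp_diff_int:
  fixes f g :: "'w \<Rightarrow> 'e::{banach,second_countable_topology}"
  assumes f: "f \<in> Lp M p" and g: "g \<in> Lp M p" and p0: "p \<noteq> 0"
  shows "integrable M (\<lambda>\<omega>. norm (f \<omega> - g \<omega>) powr p)"
proof (rule Bochner_Integration.integrable_bound)
  show "integrable M (\<lambda>\<omega>. 2 powr p * (norm (f \<omega>) powr p + norm (g \<omega>) powr p))"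
    using Lp_int[OF f p0] Lp_int[OF g p0] by auto
  show "(\<lambda>\<omega>. norm (f \<omega> - g \<omega>) powr p) \<in> borel_measurable M"
    using Lp_meas[OF f] Lp_meas[OF g] by measurable
  have p: "p \<ge> 0" using pp by auto
  show "AE x in M. norm (norm (f x - g x) powr p) \<le> norm (2 powr p * (norm (f x) powr p + norm (g x) powr p))"
  proof (intro AE_I2)
    fix x
    have "norm (f x - g x) powr p \<le> (norm (f x) + norm (g x)) powr p"
      using p by (intro powr_mono2) (auto intro: norm_triangle_ineq4)
    also have "\<dots> \<le> 2 powr p * (norm (f x) powr p + norm (g x) powr p)"
      using p by (intro powr_add_le) auto
    finally show "norm (norm (f x - g x) powr p) \<le> norm (2 powr p * (norm (f x) powr p + norm (g x) powr p))"
      by simp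
  qed
qed

definition close :: "('w \<Rightarrow> 'e::{banach,second_countable_topology}) \<Rightarrow> ('w \<Rightarrow> 'e) \<Rightarrow> real \<Rightarrow> bool" where
  "close f g \<delta> \<longleftrightarrow> (if p = 0 then measure M {\<omega>\<in>space M. norm (f \<omega> - g \<omega>) > \<delta>} \<le> \<delta>
     else integral\<^sup>L M (\<lambda>\<omega>. norm (f \<omega> - g \<omega>) powr p) \<le> \<delta>)"

lemma close_0: "p = 0 \<Longrightarrow> close f g \<delta> \<longleftrightarrow> measure M {\<omega>\<in>space M. norm (f \<omega> - g \<omega>) > \<delta>} \<le> \<delta>"
  unfolding close_def by simp

lemma close_1: "p \<noteq> 0 \<Longrightarrow> close f g \<delta> \<longleftrightarrow> integral\<^sup>L M (\<lambda>\<omega>. norm (f \<omega> - g \<omega>) powr p) \<le> \<delta>"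
  unfolding close_def by simp

lemma conv_close:
  fixes X :: "nat \<Rightarrow> 'w \<Rightarrow> 'e::{banach,second_countable_topology}"
  assumes c: "conv_p M p X \<xi>" and d: "\<delta> > 0"
  shows "\<exists>n. close (X n) \<xi> \<delta>"
proof (cases "p = 0")
  case True
  then have "(\<lambda>n. measure M {\<omega>\<in>space M. norm (X n \<omega> - \<xi> \<omega>) > \<delta>}) \<longlonglongrightarrow> 0"
    using c d by (simp add: conv_p_def)
  from order_tendstoD(2)[OF this d] obtain n where "measure M {\<omega>\<in>space M. norm (X n \<omega> - \<xi> \<omega>) > \<delta>} < \<delta>"
    by (auto simp: eventually_sequentially)
  then show ?thesis using close_0[OF True] less_imp_le by blast
next
  case False
  then have "(\<lambda>n. integral\<^sup>L M (\<lambda>\<omega>. norm (X n \<omega> - \<xi> \<omega>) powr p)) \<longlonglongrightarrow> 0"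
    using c by (simp add: conv_p_def)
  from order_tendstoD(2)[OF this d] obtain n where "integral\<^sup>L M (\<lambda>\<omega>. norm (X n \<omega> - \<xi> \<omega>) powr p) < \<delta>"
    by (auto simp: eventually_sequentially)
  then show ?thesis using close_1[OF False] less_imp_le by blast
qed

lemma close_conv:
  fixes Y :: "nat \<Rightarrow> 'w \<Rightarrow> 'e::{banach,second_countable_topology}"
  assumes Y: "\<And>m. Y m \<in> Lp M p" and \<xi>: "\<xi> \<in> Lp M p"
    and cl: "\<And>m. close (Y m) \<xi> (1 / (real m + 1))"
  shows "conv_p M p Y \<xi>"
proof -
  have lim: "(\<lambda>m. 1 / (real m + 1)) \<longlonglongrightarrow> 0"
    using LIMSEQ_inverse_real_of_nat by (simp add: inverse_eq_divide add.commute)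
  show ?thesis
  proof (cases "p = 0")
    case True
    have "(\<lambda>n. measure M {\<omega>\<in>space M. norm (Y n \<omega> - \<xi> \<omega>) > \<epsilon>}) \<longlonglongrightarrow> 0" if e: "\<epsilon> > 0" for \<epsilon>
    proof (rule tendsto_sandwich[OF _ _ tendsto_const lim])
      show "\<forall>\<^sub>F n in sequentially. 0 \<le> measure M {\<omega>\<in>space M. norm (Y n \<omega> - \<xi> \<omega>) > \<epsilon>}" by simp
      obtain N where N: "1 / (real N + 1) < \<epsilon>"
        using order_tendstoD(2)[OF lim e] by (auto simp: eventually_sequentially)
      show "\<forall>\<^sub>F n in sequentially. measure M {\<omega>\<in>space M. norm (Y n \<omega> - \<xi> \<omega>) > \<epsilon>} \<le> 1 / (real n + 1)"
        unfolding eventually_sequentially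
      proof (intro exI[of _ N] allI impI)
        fix n assume "N \<le> n"
        then have "1 / (real n + 1) \<le> 1 / (real N + 1)" by (simp add: frac_le)
        then have le: "1 / (real n + 1) < \<epsilon>" using N by simp
        have m1: "Y n \<in> borel_measurable M" "\<xi> \<in> borel_measurable M" using Y \<xi> by (auto simp: Lp_def)
        have "measure M {\<omega>\<in>space M. norm (Y n \<omega> - \<xi> \<omega>) > \<epsilon>} \<le>
              measure M {\<omega>\<in>space M. norm (Y n \<omega> - \<xi> \<omega>) > 1 / (real n + 1)}"
          using le m1 by (intro finite_measure_mono) auto
        also have "\<dots> \<le> 1 / (real n + 1)" using cl[of n] by (simp add: close_0[OF True])
        finally show "measure M {\<omega>\<in>space M. norm (Y n \<omega> - \<xi> \<omega>) > \<epsilon>} \<le> 1 / (real n + 1)" .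
      qed
    qed
    then show ?thesis using True by (simp add: conv_p_def)
  next
    case False
    have "(\<lambda>n. integral\<^sup>L M (\<lambda>\<omega>. norm (Y n \<omega> - \<xi> \<omega>) powr p)) \<longlonglongrightarrow> 0"
    proof (rule tendsto_sandwich[OF _ _ tendsto_const lim])
      show "\<forall>\<^sub>F n in sequentially. 0 \<le> integral\<^sup>L M (\<lambda>\<omega>. norm (Y n \<omega> - \<xi> \<omega>) powr p)" by simp
      show "\<forall>\<^sub>F n in sequentially. integral\<^sup>L M (\<lambda>\<omega>. norm (Y n \<omega> - \<xi> \<omega>) powr p) \<le> 1 / (real n + 1)"
        using cl by (simp add: close_1[OF False])
    qed
    then show ?thesis using False by (simp add: conv_p_def)
  qed
qed

lemma close_trans:
  fixes f g h :: "'w \<Rightarrow> 'e::{banach,second_countable_topology}"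
  assumes f: "f \<in> Lp M p" and g: "g \<in> Lp M p" and h: "h \<in> Lp M p"
    and c1: "close f g \<delta>" and c2: "close g h \<delta>"
  shows "close f h (2 * 2 powr p * \<delta>)"
proof (cases "p = 0")
  case True
  have m: "f \<in> borel_measurable M" "g \<in> borel_measurable M" "h \<in> borel_measurable M"
    using f g h by (auto simp: Lp_def)
  note m[measurable]
  have "measure M {\<omega>\<in>space M. norm (f \<omega> - h \<omega>) > 2 * \<delta>} \<le>
        measure M ({\<omega>\<in>space M. norm (f \<omega> - g \<omega>) > \<delta>} \<union> {\<omega>\<in>space M. norm (g \<omega> - h \<omega>) > \<delta>})"
  proof (rule finite_measure_mono)
    show "{\<omega>\<in>space M. norm (f \<omega> - h \<omega>) > 2 * \<delta>} \<subseteq>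
        {\<omega>\<in>space M. norm (f \<omega> - g \<omega>) > \<delta>} \<union> {\<omega>\<in>space M. norm (g \<omega> - h \<omega>) > \<delta>}"
    proof safe
      fix \<omega> assume a: "\<omega> \<in> space M" "2 * \<delta> < norm (f \<omega> - h \<omega>)" "\<not> \<delta> < norm (g \<omega> - h \<omega>)"
      have "norm (f \<omega> - h \<omega>) \<le> norm (f \<omega> - g \<omega>) + norm (g \<omega> - h \<omega>)"
        using norm_triangle_ineq[of "f \<omega> - g \<omega>" "g \<omega> - h \<omega>"] by simp
      then show "\<delta> < norm (f \<omega> - g \<omega>)" using a by simp
    qed
    show "{\<omega>\<in>space M. norm (f \<omega> - g \<omega>) > \<delta>} \<union> {\<omega>\<in>space M. norm (g \<omega> - h \<omega>) > \<delta>} \<in> sets M"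
      by measurable
  qed
  also have "\<dots> \<le> measure M {\<omega>\<in>space M. norm (f \<omega> - g \<omega>) > \<delta>} + measure M {\<omega>\<in>space M. norm (g \<omega> - h \<omega>) > \<delta>}"
    by (intro measure_subadditive) measurable
  also have "\<dots> \<le> 2 * \<delta>" using c1 c2 by (simp add: close_0[OF True])
  finally show ?thesis unfolding close_0[OF True] using True by simp
next
  case False
  have p: "p \<ge> 0" using pp by auto
  have "integral\<^sup>L M (\<lambda>\<omega>. norm (f \<omega> - h \<omega>) powr p) \<le>
        integral\<^sup>L M (\<lambda>\<omega>. 2 powr p * (norm (f \<omega> - g \<omega>) powr p + norm (g \<omega> - h \<omega>) powr p))"
  proof (rule integral_mono)
    show "integrable M (\<lambda>\<omega>. norm (f \<omega> - h \<omega>) powr p)" using Lp_diff_int[OF f h False] .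
    show "integrable M (\<lambda>\<omega>. 2 powr p * (norm (f \<omega> - g \<omega>) powr p + norm (g \<omega> - h \<omega>) powr p))"
      using Lp_diff_int[OF f g False] Lp_diff_int[OF g h False] by auto
    fix \<omega>
    have "norm (f \<omega> - h \<omega>) powr p \<le> (norm (f \<omega> - g \<omega>) + norm (g \<omega> - h \<omega>)) powr p"
      using p norm_triangle_ineq[of "f \<omega> - g \<omega>" "g \<omega> - h \<omega>"] by (intro powr_mono2) auto
    also have "\<dots> \<le> 2 powr p * (norm (f \<omega> - g \<omega>) powr p + norm (g \<omega> - h \<omega>) powr p)"
      using p by (intro powr_add_le) auto
    finally show "norm (f \<omega> - h \<omega>) powr p \<le> 2 powr p * (norm (f \<omega> - g \<omega>) powr p + norm (g \<omega> - h \<omega>) powr p)" .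
  qed
  also have "\<dots> = 2 powr p * (integral\<^sup>L M (\<lambda>\<omega>. norm (f \<omega> - g \<omega>) powr p) + integral\<^sup>L M (\<lambda>\<omega>. norm (g \<omega> - h \<omega>) powr p))"
    using Lp_diff_int[OF f g False] Lp_diff_int[OF g h False] by simp
  also have "\<dots> \<le> 2 powr p * (\<delta> + \<delta>)"
    using c1 c2 by (intro mult_left_mono add_mono) (auto simp: close_1[OF False])
  finally show ?thesis by (simp add: close_1[OF False])
qed

lemma clp_closed:
  fixes S :: "('w \<Rightarrow> 'e::{banach,second_countable_topology}) set"
  assumes S: "S \<subseteq> Lp M p" and X: "\<And>n. X n \<in> clp M p S" and c: "conv_p M p X \<xi>" and \<xi>: "\<xi> \<in> Lp M p"
  shows "\<xi> \<in> clp M p S"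
proof -
  define C :: real where "C = 2 * 2 powr p"
  have C: "C > 0" by (simp add: C_def)
  have "\<exists>z. z \<in> S \<and> close z \<xi> (1 / (real m + 1))" for m
  proof -
    define \<delta> where "\<delta> = 1 / (C * (real m + 1))"
    have d: "\<delta> > 0" using C by (simp add: \<delta>_def)
    obtain n where n: "close (X n) \<xi> \<delta>" using conv_close[OF c d] by blast
    from X[of n] obtain Z where Z: "\<And>k. Z k \<in> S" "conv_p M p Z (X n)" and Xn: "X n \<in> Lp M p"
      by (auto simp: clp_def)
    obtain k where k: "close (Z k) (X n) \<delta>" using conv_close[OF Z(2) d] by blast
    have "close (Z k) \<xi> (C * \<delta>)" unfolding C_def
      by (rule close_trans[OF _ Xn \<xi> k n]) (use Z S in auto)
    moreover have "C * \<delta> = 1 / (real m + 1)" using C by (simp add: \<delta>_def)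
    ultimately show ?thesis using Z by metis
  qed
  then obtain Y where Y: "\<And>m. Y m \<in> S" "\<And>m. close (Y m) \<xi> (1 / (real m + 1))" by metis
  have "conv_p M p Y \<xi>" by (rule close_conv) (use Y S \<xi> in auto)
  then show ?thesis using Y \<xi> by (auto simp: clp_def)
qed

lemma conv_cong:
  fixes X Y :: "nat \<Rightarrow> 'w \<Rightarrow> 'e::{banach,second_countable_topology}"
  assumes XY: "\<And>n. X n \<in> Lp M p" "\<And>n. Y n \<in> Lp M p" "\<And>n. AE \<omega> in M. X n \<omega> = Y n \<omega>"
    and \<xi>: "\<xi> \<in> Lp M p" "\<eta> \<in> Lp M p" "AE \<omega> in M. \<xi> \<omega> = \<eta> \<omega>"
    and c: "conv_p M p X \<xi>"
  shows "conv_p M p Y \<eta>"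
proof (cases "p = 0")
  case True
  have m: "X n \<in> borel_measurable M" "Y n \<in> borel_measurable M" "\<xi> \<in> borel_measurable M" "\<eta> \<in> borel_measurable M" for n
    using XY \<xi> by (auto simp: Lp_def)
  note m[measurable]
  have "measure M {\<omega>\<in>space M. norm (X n \<omega> - \<xi> \<omega>) > \<epsilon>} = measure M {\<omega>\<in>space M. norm (Y n \<omega> - \<eta> \<omega>) > \<epsilon>}" for n \<epsilon>
  proof (rule measure_eq_AE)
    show "AE x in M. (x \<in> {\<omega>\<in>space M. norm (X n \<omega> - \<xi> \<omega>) > \<epsilon>}) = (x \<in> {\<omega>\<in>space M. norm (Y n \<omega> - \<eta> \<omega>) > \<epsilon>})"
      using XY(3)[of n] \<xi>(3) by eventually_elim auto
  qed measurable
  then show ?thesis using c True by (simp add: conv_p_def)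
next
  case False
  have m: "X n \<in> borel_measurable M" "Y n \<in> borel_measurable M" "\<xi> \<in> borel_measurable M" "\<eta> \<in> borel_measurable M" for n
    using XY \<xi> by (auto simp: Lp_def)
  note m[measurable]
  have "integral\<^sup>L M (\<lambda>\<omega>. norm (X n \<omega> - \<xi> \<omega>) powr p) = integral\<^sup>L M (\<lambda>\<omega>. norm (Y n \<omega> - \<eta> \<omega>) powr p)" for n
  proof (rule integral_cong_AE)
    show "AE x in M. norm (X n x - \<xi> x) powr p = norm (Y n x - \<eta> x) powr p"
      using XY(3)[of n] \<xi>(3) by eventually_elim auto
  qed measurable
  then show ?thesis using c False by (simp add: conv_p_def)
qed

end

lemma sum_ind_unique:
  fixes f :: "nat \<Rightarrow> 'e::real_vector"
  assumes "finite I" "disjoint_family_on B I" "i0 \<in> I" "x \<in> B i0"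
  shows "(\<Sum>i\<in>I. indicator (B i) x *\<^sub>R f i) = f i0"
proof -
  have "(\<Sum>i\<in>I. indicator (B i) x *\<^sub>R f i) = indicator (B i0) x *\<^sub>R f i0 + (\<Sum>i\<in>I - {i0}. indicator (B i) x *\<^sub>R f i)"
    by (rule sum.remove[OF assms(1) assms(3)])
  also have "(\<Sum>i\<in>I - {i0}. indicator (B i) x *\<^sub>R f i) = 0"
  proof (rule sum.neutral, intro ballI)
    fix i assume i: "i \<in> I - {i0}"
    then have "x \<notin> B i" using assms unfolding disjoint_family_on_def by blast
    then show "indicator (B i) x *\<^sub>R f i = 0" by simp
  qed
  finally show ?thesis using assms by simp
qed

context setting
begin

definition mix :: "'w set \<Rightarrow> ('w \<Rightarrow> 'e::real_vector) \<Rightarrow> ('w \<Rightarrow> 'e) \<Rightarrow> 'w \<Rightarrow> 'e" where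
  "mix B f g = (\<lambda>\<omega>. indicator B \<omega> *\<^sub>R f \<omega> + indicator (space M - B) \<omega> *\<^sub>R g \<omega>)"

lemma mix_eval: "\<omega> \<in> space M \<Longrightarrow> mix B f g \<omega> = (if \<omega> \<in> B then f \<omega> else g \<omega>)"
  by (simp add: mix_def indicator_def)

lemma mix_meas[measurable]:
  fixes f g :: "'w \<Rightarrow> 'e::{banach,second_countable_topology}"
  assumes [measurable]: "B \<in> sets M" "f \<in> borel_measurable M" "g \<in> borel_measurable M"
  shows "mix B f g \<in> borel_measurable M"
  unfolding mix_def by measurable

lemma mix_Lp:
  fixes f g :: "'w \<Rightarrow> 'e::{banach,second_countable_topology}"
  assumes B: "B \<in> sets M" and f: "f \<in> Lp M p" and g: "g \<in> Lp M p"
  shows "mix B f g \<in> Lp M p"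
proof (rule Lp_I)
  show "mix B f g \<in> borel_measurable M" using B Lp_meas[OF f] Lp_meas[OF g] by (rule mix_meas)
  show "integrable M (\<lambda>\<omega>. norm (f \<omega>) powr p + norm (g \<omega>) powr p)" if "p \<noteq> 0"
    using Lp_int[OF f that] Lp_int[OF g that] by auto
  fix \<omega> assume "\<omega> \<in> space M"
  then show "norm (mix B f g \<omega>) powr p \<le> norm (f \<omega>) powr p + norm (g \<omega>) powr p"
    by (simp add: mix_eval)
qed

lemma conv_const:
  fixes \<xi> :: "'w \<Rightarrow> 'e::{banach,second_countable_topology}"
  shows "conv_p M p (\<lambda>n. \<xi>) \<xi>"
  by (simp add: conv_p_def)

lemma clp_self:
  fixes S :: "('w \<Rightarrow> 'e::{banach,second_countable_topology}) set"
  assumes "S \<subseteq> Lp M p" shows "S \<subseteq> clp M p S"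
proof
  fix \<xi> assume "\<xi> \<in> S"
  then show "\<xi> \<in> clp M p S" using assms conv_const[of \<xi>] unfolding clp_def
    by (intro CollectI conjI exI[of _ "\<lambda>n. \<xi>"]) auto
qed

lemma clp_Lp: "clp M p S \<subseteq> Lp M p"
  by (auto simp: clp_def)

lemma clp_ae:
  fixes S :: "('w \<Rightarrow> 'e::{banach,second_countable_topology}) set"
  assumes S: "S \<subseteq> Lp M p" and \<xi>: "\<xi> \<in> clp M p S" and ae: "AE \<omega> in M. \<xi> \<omega> = \<eta> \<omega>"
  shows "\<eta> \<in> clp M p S"
proof -
  from \<xi> obtain X where X: "\<And>n. X n \<in> S" "conv_p M p X \<xi>" and \<xi>L: "\<xi> \<in> Lp M p" by (auto simp: clp_def)
  have \<eta>L: "\<eta> \<in> Lp M p" using Lp_ae[OF \<xi>L ae] .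
  have "conv_p M p X \<eta>"
    by (rule conv_cong[OF _ _ _ \<xi>L \<eta>L ae X(2)]) (use X S in auto)
  then show ?thesis using X \<eta>L by (auto simp: clp_def)
qed

lemma dec_Lp:
  fixes A :: "('w \<Rightarrow> 'e::{banach,second_countable_topology}) set"
  assumes A: "A \<subseteq> Lp M p"
  shows "dec M A \<subseteq> Lp M p"
proof
  fix \<eta> assume "\<eta> \<in> dec M A"
  then obtain m :: nat and \<xi> B where h: "\<forall>i<m. \<xi> i \<in> A \<and> B i \<in> sets M" "disjoint_family_on B {..<m}"
      "(\<Union>i<m. B i) = space M" "\<eta> = (\<lambda>\<omega>. \<Sum>i<m. indicator (B i) \<omega> *\<^sub>R \<xi> i \<omega>)"
    unfolding dec_def by blast
  have [measurable]: "\<And>i. i < m \<Longrightarrow> \<xi> i \<in> borel_measurable M" "\<And>i. i < m \<Longrightarrow> B i \<in> sets M"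
    using h(1) A by (auto simp: Lp_def)
  show "\<eta> \<in> Lp M p"
  proof (rule Lp_I)
    show "\<eta> \<in> borel_measurable M" unfolding h(4)
      by (intro borel_measurable_sum) measurable
    show "integrable M (\<lambda>\<omega>. \<Sum>i<m. norm (\<xi> i \<omega>) powr p)" if "p \<noteq> 0"
      using h(1) A Lp_int[OF _ that] by (intro Bochner_Integration.integrable_sum) blast
    fix \<omega> assume \<omega>: "\<omega> \<in> space M"
    then obtain i0 where i0: "i0 < m" "\<omega> \<in> B i0" using h(3) by blast
    have "\<eta> \<omega> = \<xi> i0 \<omega>" unfolding h(4)
      using sum_ind_unique[of "{..<m}" B i0 \<omega> "\<lambda>i. \<xi> i \<omega>"] h(2) i0 by simp
    then show "norm (\<eta> \<omega>) powr p \<le> (\<Sum>i<m. norm (\<xi> i \<omega>) powr p)"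
      using i0 by (auto intro: member_le_sum)
  qed
qed

lemma A_sub_D:
  fixes A :: "('w \<Rightarrow> 'e::{banach,second_countable_topology}) set"
  assumes A: "A \<subseteq> Lp M p"
  shows "A \<subseteq> clp M p (dec M A)"
proof
  fix \<xi> assume \<xi>: "\<xi> \<in> A"
  define X where "X = (\<lambda>\<omega>. indicator (space M) \<omega> *\<^sub>R \<xi> \<omega>)"
  have "X \<in> dec M A" unfolding dec_def X_def
    by (rule CollectI, rule exI[of _ 1], rule exI[of _ "\<lambda>_. \<xi>"], rule exI[of _ "\<lambda>_. space M"])
       (auto simp: \<xi> disjoint_family_on_def)
  then have XL: "X \<in> Lp M p" using dec_Lp[OF A] by blast
  have \<xi>L: "\<xi> \<in> Lp M p" using A \<xi> by blast
  have "conv_p M p (\<lambda>n. X) \<xi>"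
    by (rule conv_cong[OF _ _ _ \<xi>L \<xi>L _ conv_const[of \<xi>]]) (use XL \<xi>L in \<open>auto simp: X_def\<close>)
  then show "\<xi> \<in> clp M p (dec M A)" using \<open>X \<in> dec M A\<close> \<xi>L unfolding clp_def
    by (intro CollectI conjI exI[of _ "\<lambda>n. X"]) auto
qed

lemma dec_mix:
  fixes A :: "('w \<Rightarrow> 'e::{banach,second_countable_topology}) set"
  assumes X: "X \<in> dec M A" and Z: "Z \<in> dec M A" and BB: "BB \<in> sets M"
  shows "\<exists>W\<in>dec M A. \<forall>\<omega>\<in>space M. W \<omega> = mix BB X Z \<omega>"
proof -
  obtain m :: nat and \<xi> B where h: "\<forall>i<m. \<xi> i \<in> A \<and> B i \<in> sets M" "disjoint_family_on B {..<m}"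
      "(\<Union>i<m. B i) = space M" "X = (\<lambda>\<omega>. \<Sum>i<m. indicator (B i) \<omega> *\<^sub>R \<xi> i \<omega>)"
    using X unfolding dec_def by blast
  obtain m' :: nat and \<zeta> C where k: "\<forall>i<m'. \<zeta> i \<in> A \<and> C i \<in> sets M" "disjoint_family_on C {..<m'}"
      "(\<Union>i<m'. C i) = space M" "Z = (\<lambda>\<omega>. \<Sum>i<m'. indicator (C i) \<omega> *\<^sub>R \<zeta> i \<omega>)"
    using Z unfolding dec_def by blast
  define \<xi>' where "\<xi>' i = (if i < m then \<xi> i else \<zeta> (i - m))" for i
  define B' where "B' i = (if i < m then BB \<inter> B i else (space M - BB) \<inter> C (i - m))" for i
  define W where "W = (\<lambda>\<omega>. \<Sum>i<m+m'. indicator (B' i) \<omega> *\<^sub>R \<xi>' i \<omega>)"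
  have Bsp: "B i \<subseteq> space M" if "i < m" for i using h(1) that sets.sets_into_space by blast
  have Csp: "C i \<subseteq> space M" if "i < m'" for i using k(1) that sets.sets_into_space by blast
  have disj: "disjoint_family_on B' {..<m+m'}"
    unfolding disjoint_family_on_def
  proof (intro ballI impI)
    fix i j assume ij: "i \<in> {..<m+m'}" "j \<in> {..<m+m'}" "i \<noteq> j"
    show "B' i \<inter> B' j = {}"
    proof (cases "i < m"; cases "j < m")
      assume "i < m" "j < m" then show ?thesis
        using h(2) ij unfolding B'_def disjoint_family_on_def by auto
    next
      assume "\<not> i < m" "\<not> j < m"
      then have "i - m \<noteq> j - m" "i - m < m'" "j - m < m'" using ij by auto
      then show ?thesis using \<open>\<not> i < m\<close> \<open>\<not> j < m\<close> k(2) unfolding B'_def disjoint_family_on_def by auto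
    qed (auto simp: B'_def)
  qed
  have "W \<in> dec M A" unfolding dec_def
  proof (rule CollectI, intro exI conjI)
    show "\<forall>i<m+m'. \<xi>' i \<in> A \<and> B' i \<in> sets M"
      using h(1) k(1) BB by (auto simp: \<xi>'_def B'_def)
    show "disjoint_family_on B' {..<m+m'}" by (rule disj)
    show "(\<Union>i<m+m'. B' i) = space M"
    proof
      show "(\<Union>i<m+m'. B' i) \<subseteq> space M" using Bsp Csp by (auto simp: B'_def split: if_splits)
      show "space M \<subseteq> (\<Union>i<m+m'. B' i)"
      proof
        fix \<omega> assume \<omega>: "\<omega> \<in> space M"
        show "\<omega> \<in> (\<Union>i<m+m'. B' i)"
        proof (cases "\<omega> \<in> BB")
          case True
          obtain i where "i < m" "\<omega> \<in> B i" using h(3) \<omega> by blast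
          then show ?thesis using True by (auto simp: B'_def intro!: bexI[of _ i])
        next
          case False
          obtain j where "j < m'" "\<omega> \<in> C j" using k(3) \<omega> by blast
          then show ?thesis using False \<omega> by (auto simp: B'_def intro!: bexI[of _ "m+j"])
        qed
      qed
    qed
  qed (simp add: W_def)
  moreover have "\<forall>\<omega>\<in>space M. W \<omega> = mix BB X Z \<omega>"
  proof
    fix \<omega> assume \<omega>: "\<omega> \<in> space M"
    show "W \<omega> = mix BB X Z \<omega>"
    proof (cases "\<omega> \<in> BB")
      case True
      obtain i where i: "i < m" "\<omega> \<in> B i" using h(3) \<omega> by blast
      have "W \<omega> = \<xi>' i \<omega>" unfolding W_def
        using sum_ind_unique[of "{..<m+m'}" B' i \<omega> "\<lambda>i. \<xi>' i \<omega>"] disj i True by (simp add: B'_def)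
      moreover have "X \<omega> = \<xi> i \<omega>" unfolding h(4)
        using sum_ind_unique[of "{..<m}" B i \<omega> "\<lambda>i. \<xi> i \<omega>"] h(2) i by simp
      ultimately show ?thesis using True \<omega> i by (simp add: mix_eval \<xi>'_def)
    next
      case False
      obtain j where j: "j < m'" "\<omega> \<in> C j" using k(3) \<omega> by blast
      have "W \<omega> = \<xi>' (m+j) \<omega>" unfolding W_def
        using sum_ind_unique[of "{..<m+m'}" B' "m+j" \<omega> "\<lambda>i. \<xi>' i \<omega>"] disj j False \<omega> by (simp add: B'_def)
      moreover have "Z \<omega> = \<zeta> j \<omega>" unfolding k(4)
        using sum_ind_unique[of "{..<m'}" C j \<omega> "\<lambda>i. \<zeta> i \<omega>"] k(2) j by simp
      ultimately show ?thesis using False \<omega> j by (simp add: mix_eval \<xi>'_def)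
    qed
  qed
  ultimately show ?thesis by blast
qed

lemma conv_mix:
  fixes X Z :: "nat \<Rightarrow> 'w \<Rightarrow> 'e::{banach,second_countable_topology}"
  assumes B: "B \<in> sets M" and XL: "\<And>n. X n \<in> Lp M p" and ZL: "\<And>n. Z n \<in> Lp M p"
    and \<xi>L: "\<xi> \<in> Lp M p" and \<zeta>L: "\<zeta> \<in> Lp M p"
    and cX: "conv_p M p X \<xi>" and cZ: "conv_p M p Z \<zeta>"
  shows "conv_p M p (\<lambda>n. mix B (X n) (Z n)) (mix B \<xi> \<zeta>)"
proof -
  have m[measurable]: "X n \<in> borel_measurable M" "Z n \<in> borel_measurable M" "\<xi> \<in> borel_measurable M" "\<zeta> \<in> borel_measurable M" for n
    using XL ZL \<xi>L \<zeta>L by (auto simp: Lp_def)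
  have ev: "\<omega> \<in> space M \<Longrightarrow> norm (mix B (X n) (Z n) \<omega> - mix B \<xi> \<zeta> \<omega>) =
      (if \<omega> \<in> B then norm (X n \<omega> - \<xi> \<omega>) else norm (Z n \<omega> - \<zeta> \<omega>))" for \<omega> n
    by (simp add: mix_eval)
  show ?thesis
  proof (cases "p = 0")
    case True
    have "(\<lambda>n. measure M {\<omega>\<in>space M. norm (mix B (X n) (Z n) \<omega> - mix B \<xi> \<zeta> \<omega>) > \<epsilon>}) \<longlonglongrightarrow> 0" if e: "\<epsilon> > 0" for \<epsilon>
    proof (rule tendsto_sandwich[OF _ _ tendsto_const])
      have l1: "(\<lambda>n. measure M {\<omega>\<in>space M. norm (X n \<omega> - \<xi> \<omega>) > \<epsilon>}) \<longlonglongrightarrow> 0"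
        using cX True e by (simp add: conv_p_def)
      have l2: "(\<lambda>n. measure M {\<omega>\<in>space M. norm (Z n \<omega> - \<zeta> \<omega>) > \<epsilon>}) \<longlonglongrightarrow> 0"
        using cZ True e by (simp add: conv_p_def)
      show "(\<lambda>n. measure M {\<omega>\<in>space M. norm (X n \<omega> - \<xi> \<omega>) > \<epsilon>} + measure M {\<omega>\<in>space M. norm (Z n \<omega> - \<zeta> \<omega>) > \<epsilon>}) \<longlonglongrightarrow> 0"
        using tendsto_add[OF l1 l2] by simp
      show "\<forall>\<^sub>F n in sequentially. 0 \<le> measure M {\<omega>\<in>space M. norm (mix B (X n) (Z n) \<omega> - mix B \<xi> \<zeta> \<omega>) > \<epsilon>}" by simp
      show "\<forall>\<^sub>F n in sequentially. measure M {\<omega>\<in>space M. norm (mix B (X n) (Z n) \<omega> - mix B \<xi> \<zeta> \<omega>) > \<epsilon>}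
          \<le> measure M {\<omega>\<in>space M. norm (X n \<omega> - \<xi> \<omega>) > \<epsilon>} + measure M {\<omega>\<in>space M. norm (Z n \<omega> - \<zeta> \<omega>) > \<epsilon>}"
      proof (intro always_eventually allI)
        fix n
        have "measure M {\<omega>\<in>space M. norm (mix B (X n) (Z n) \<omega> - mix B \<xi> \<zeta> \<omega>) > \<epsilon>}
            \<le> measure M ({\<omega>\<in>space M. norm (X n \<omega> - \<xi> \<omega>) > \<epsilon>} \<union> {\<omega>\<in>space M. norm (Z n \<omega> - \<zeta> \<omega>) > \<epsilon>})"
          by (rule finite_measure_mono) (auto simp: ev split: if_splits)
        also have "\<dots> \<le> measure M {\<omega>\<in>space M. norm (X n \<omega> - \<xi> \<omega>) > \<epsilon>} + measure M {\<omega>\<in>space M. norm (Z n \<omega> - \<zeta> \<omega>) > \<epsilon>}"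
          by (intro measure_subadditive) measurable
        finally show "measure M {\<omega>\<in>space M. norm (mix B (X n) (Z n) \<omega> - mix B \<xi> \<zeta> \<omega>) > \<epsilon>}
          \<le> measure M {\<omega>\<in>space M. norm (X n \<omega> - \<xi> \<omega>) > \<epsilon>} + measure M {\<omega>\<in>space M. norm (Z n \<omega> - \<zeta> \<omega>) > \<epsilon>}" .
      qed
    qed
    then show ?thesis using True by (simp add: conv_p_def)
  next
    case False
    have "(\<lambda>n. integral\<^sup>L M (\<lambda>\<omega>. norm (mix B (X n) (Z n) \<omega> - mix B \<xi> \<zeta> \<omega>) powr p)) \<longlonglongrightarrow> 0"
    proof (rule tendsto_sandwich[OF _ _ tendsto_const])
      have l1: "(\<lambda>n. integral\<^sup>L M (\<lambda>\<omega>. norm (X n \<omega> - \<xi> \<omega>) powr p)) \<longlonglongrightarrow> 0"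
        using cX False by (simp add: conv_p_def)
      have l2: "(\<lambda>n. integral\<^sup>L M (\<lambda>\<omega>. norm (Z n \<omega> - \<zeta> \<omega>) powr p)) \<longlonglongrightarrow> 0"
        using cZ False by (simp add: conv_p_def)
      show "(\<lambda>n. integral\<^sup>L M (\<lambda>\<omega>. norm (X n \<omega> - \<xi> \<omega>) powr p) + integral\<^sup>L M (\<lambda>\<omega>. norm (Z n \<omega> - \<zeta> \<omega>) powr p)) \<longlonglongrightarrow> 0"
        using tendsto_add[OF l1 l2] by simp
      show "\<forall>\<^sub>F n in sequentially. 0 \<le> integral\<^sup>L M (\<lambda>\<omega>. norm (mix B (X n) (Z n) \<omega> - mix B \<xi> \<zeta> \<omega>) powr p)" by simp
      show "\<forall>\<^sub>F n in sequentially. integral\<^sup>L M (\<lambda>\<omega>. norm (mix B (X n) (Z n) \<omega> - mix B \<xi> \<zeta> \<omega>) powr p)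
          \<le> integral\<^sup>L M (\<lambda>\<omega>. norm (X n \<omega> - \<xi> \<omega>) powr p) + integral\<^sup>L M (\<lambda>\<omega>. norm (Z n \<omega> - \<zeta> \<omega>) powr p)"
      proof (intro always_eventually allI)
        fix n
        have i1: "integrable M (\<lambda>\<omega>. norm (X n \<omega> - \<xi> \<omega>) powr p)" using Lp_diff_int[OF XL \<xi>L False] .
        have i2: "integrable M (\<lambda>\<omega>. norm (Z n \<omega> - \<zeta> \<omega>) powr p)" using Lp_diff_int[OF ZL \<zeta>L False] .
        have i3: "integrable M (\<lambda>\<omega>. norm (mix B (X n) (Z n) \<omega> - mix B \<xi> \<zeta> \<omega>) powr p)"
          using Lp_diff_int[OF mix_Lp[OF B XL ZL] mix_Lp[OF B \<xi>L \<zeta>L] False] .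
        have "integral\<^sup>L M (\<lambda>\<omega>. norm (mix B (X n) (Z n) \<omega> - mix B \<xi> \<zeta> \<omega>) powr p)
           \<le> integral\<^sup>L M (\<lambda>\<omega>. norm (X n \<omega> - \<xi> \<omega>) powr p + norm (Z n \<omega> - \<zeta> \<omega>) powr p)"
          by (rule integral_mono_AE[OF i3 Bochner_Integration.integrable_add[OF i1 i2]], rule AE_I2) (simp add: ev)
        then show "integral\<^sup>L M (\<lambda>\<omega>. norm (mix B (X n) (Z n) \<omega> - mix B \<xi> \<zeta> \<omega>) powr p)
          \<le> integral\<^sup>L M (\<lambda>\<omega>. norm (X n \<omega> - \<xi> \<omega>) powr p) + integral\<^sup>L M (\<lambda>\<omega>. norm (Z n \<omega> - \<zeta> \<omega>) powr p)"
          using i1 i2 by simp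
      qed
    qed
    then show ?thesis using False by (simp add: conv_p_def)
  qed
qed

lemma D_mix:
  fixes A :: "('w \<Rightarrow> 'e::{banach,second_countable_topology}) set"
  assumes A: "A \<subseteq> Lp M p" and \<xi>: "\<xi> \<in> clp M p (dec M A)" and \<zeta>: "\<zeta> \<in> clp M p (dec M A)"
    and B: "B \<in> sets M"
  shows "mix B \<xi> \<zeta> \<in> clp M p (dec M A)"
proof -
  have dL: "dec M A \<subseteq> Lp M p" using dec_Lp[OF A] .
  from \<xi> obtain X where X: "\<And>n. X n \<in> dec M A" "conv_p M p X \<xi>" and \<xi>L: "\<xi> \<in> Lp M p" by (auto simp: clp_def)
  from \<zeta> obtain Z where Z: "\<And>n. Z n \<in> dec M A" "conv_p M p Z \<zeta>" and \<zeta>L: "\<zeta> \<in> Lp M p" by (auto simp: clp_def)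
  have "\<exists>W. W \<in> dec M A \<and> (\<forall>\<omega>\<in>space M. W \<omega> = mix B (X n) (Z n) \<omega>)" for n
    using dec_mix[OF X(1) Z(1) B] by blast
  then obtain W where W: "\<And>n. W n \<in> dec M A" "\<And>n. \<forall>\<omega>\<in>space M. W n \<omega> = mix B (X n) (Z n) \<omega>" by metis
  have XL: "X n \<in> Lp M p" "Z n \<in> Lp M p" "W n \<in> Lp M p" for n using X Z W dL by auto
  have mL: "mix B \<xi> \<zeta> \<in> Lp M p" using mix_Lp[OF B \<xi>L \<zeta>L] .
  have "conv_p M p W (mix B \<xi> \<zeta>)"
  proof (rule conv_cong[OF _ _ _ mL mL _ conv_mix[OF B _ _ \<xi>L \<zeta>L X(2) Z(2)]])
    show "mix B (X n) (Z n) \<in> Lp M p" for n using mix_Lp[OF B XL(1) XL(2)] .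
    show "AE \<omega> in M. mix B (X n) (Z n) \<omega> = W n \<omega>" for n using W(2)[of n] by (intro AE_I2) auto
  qed (use XL in auto)
  then show ?thesis using W(1) mL by (auto simp: clp_def)
qed

end

lemma dense_seq:
  "\<exists>e::nat \<Rightarrow> 'e::{metric_space,second_countable_topology}. \<forall>x r. r > 0 \<longrightarrow> (\<exists>i. dist x (e i) < r)"
proof -
  obtain D :: "'e set" where "countable D" and D: "\<And>X. open X \<Longrightarrow> X \<noteq> {} \<Longrightarrow> \<exists>d\<in>D. d \<in> X"
    by (erule countable_dense_setE)
  define e where "e = from_nat_into D"
  have "\<exists>i. dist x (e i) < r" if "r > 0" for x r
  proof -
    have "ball x r \<noteq> {}" using that by simp
    then obtain d where "d \<in> D" and d: "d \<in> ball x r"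
      using D[of "ball x r"] by blast
    from \<open>d \<in> D\<close> D[of UNIV] \<open>countable D\<close> obtain i where "d = e i"
      unfolding e_def by (auto dest: from_nat_into_surj)
    with d show ?thesis by auto
  qed
  then show ?thesis by blast
qed

lemma closure_pt:
  fixes e :: "nat \<Rightarrow> 'e::metric_space" and v :: 'e
  assumes e: "\<forall>x r. r > 0 \<longrightarrow> (\<exists>i. dist x (e i) < r)"
    and h: "\<forall>k j. \<exists>n. min 1 (dist (\<psi> k n) (e k)) < min 1 (dist v (e k)) + 1 / (real j + 1)"
  shows "v \<in> closure {\<psi> k n | k n. True}"
  unfolding closure_approachable
proof (intro allI impI)
  fix r :: real assume r: "r > 0"
  define s where "s = min (r/3) (1/3)"
  have s: "s > 0" "s \<le> r/3" "s \<le> 1/3" using r by (auto simp: s_def)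
  obtain k where k: "dist v (e k) < s" using e s by blast
  obtain j0 where j0: "j0 > 0" "inverse (real j0) < s" using ex_inverse_of_nat_less[OF s(1)] by blast
  define j where "j = j0 - 1"
  have j: "1 / (real j + 1) < s" using j0 by (simp add: j_def of_nat_diff inverse_eq_divide)
  obtain n where n: "min 1 (dist (\<psi> k n) (e k)) < min 1 (dist v (e k)) + 1 / (real j + 1)" using h by blast
  have "min 1 (dist (\<psi> k n) (e k)) < 2 * s" using n k j by linarith
  then have d1: "dist (\<psi> k n) (e k) < 2 * s" using s by (auto simp: min_def split: if_splits)
  have "dist (\<psi> k n) v \<le> dist (\<psi> k n) (e k) + dist v (e k)" by (rule dist_triangle2)
  then have "dist (\<psi> k n) v < r" using d1 k s by linarith
  then show "\<exists>y\<in>{\<psi> k n |k n. True}. dist y v < r" by blast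
qed

context setting
begin

definition gk :: "('e::metric_space) \<Rightarrow> ('w \<Rightarrow> 'e) \<Rightarrow> 'w \<Rightarrow> real" where
  "gk c \<xi> \<omega> = min 1 (dist (\<xi> \<omega>) c)"

lemma gk_meas[measurable]:
  fixes \<xi> :: "'w \<Rightarrow> 'e::{banach,second_countable_topology}"
  assumes [measurable]: "\<xi> \<in> borel_measurable M"
  shows "gk c \<xi> \<in> borel_measurable M"
  unfolding gk_def by measurable

lemma gk_int:
  fixes \<xi> :: "'w \<Rightarrow> 'e::{banach,second_countable_topology}"
  assumes "\<xi> \<in> borel_measurable M"
  shows "integrable M (gk c \<xi>)"
proof (rule Bochner_Integration.integrable_bound[of _ "\<lambda>_. 1::real"])
  show "integrable M (\<lambda>_. 1::real)" by simp
  show "gk c \<xi> \<in> borel_measurable M" using assms by measurable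
  show "AE x in M. norm (gk c \<xi> x) \<le> norm (1::real)" by (intro AE_I2) (simp add: gk_def)
qed

lemma gk_mix: "\<omega> \<in> space M \<Longrightarrow> gk c (mix S f g) \<omega> = (if \<omega> \<in> S then gk c f \<omega> else gk c g \<omega>)"
  by (simp add: gk_def mix_eval)

lemma gk_nonneg: "gk c \<xi> \<omega> \<ge> 0" by (simp add: gk_def)

lemma essinf_claim:
  fixes A :: "('w \<Rightarrow> 'e::{banach,second_countable_topology}) set" and c :: 'e
  assumes A: "A \<subseteq> Lp M p"
    and \<psi>: "\<And>n. \<psi> n \<in> clp M p (dec M A)"
    and lb: "\<And>\<zeta>. \<zeta> \<in> clp M p (dec M A) \<Longrightarrow> cc \<le> integral\<^sup>L M (gk c \<zeta>)"
    and lim: "(\<lambda>n. integral\<^sup>L M (gk c (\<psi> n))) \<longlonglongrightarrow> cc"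
    and \<xi>: "\<xi> \<in> clp M p (dec M A)" and eps: "\<epsilon> > 0"
  shows "AE \<omega> in M. \<exists>n. gk c (\<psi> n) \<omega> < gk c \<xi> \<omega> + \<epsilon>"
proof -
  have mm[measurable]: "\<psi> n \<in> borel_measurable M" "\<xi> \<in> borel_measurable M" for n
    using \<psi> \<xi> clp_Lp Lp_meas by blast+
  define S where "S = {\<omega>\<in>space M. \<forall>n. gk c \<xi> \<omega> + \<epsilon> \<le> gk c (\<psi> n) \<omega>}"
  have gm: "gk c (\<psi> n) \<in> borel_measurable M" "(\<lambda>\<omega>. gk c \<xi> \<omega> + \<epsilon>) \<in> borel_measurable M" for n
    by (rule gk_meas[OF mm(1)], rule borel_measurable_add[OF gk_meas[OF mm(2)] borel_measurable_const])
  have S[measurable]: "S \<in> sets M" unfolding S_def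
    by (rule sets.sets_Collect_countable_All, rule borel_measurable_le[OF gm(2) gm(1)])
  have Sint: "integrable M (indicator S :: 'w \<Rightarrow> real)"
    by (rule integrable_real_indicator[OF S]) (simp add: emeasure_eq_measure)
  have "cc + \<epsilon> * measure M S \<le> integral\<^sup>L M (gk c (\<psi> n))" for n
  proof -
    have z: "mix S \<xi> (\<psi> n) \<in> clp M p (dec M A)" by (rule D_mix[OF A \<xi> \<psi> S])
    have "cc \<le> integral\<^sup>L M (gk c (mix S \<xi> (\<psi> n)))" using lb[OF z] .
    also have "\<dots> \<le> integral\<^sup>L M (\<lambda>\<omega>. gk c (\<psi> n) \<omega> - \<epsilon> * indicator S \<omega>)"
    proof (rule integral_mono)
      show "integrable M (gk c (mix S \<xi> (\<psi> n)))" by (rule gk_int[OF mix_meas[OF S mm(2) mm(1)]])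
      show "integrable M (\<lambda>\<omega>. gk c (\<psi> n) \<omega> - \<epsilon> * indicator S \<omega>)"
        using gk_int[of "\<psi> n" c] Sint by (intro Bochner_Integration.integrable_diff) auto
      fix \<omega> assume \<omega>: "\<omega> \<in> space M"
      show "gk c (mix S \<xi> (\<psi> n)) \<omega> \<le> gk c (\<psi> n) \<omega> - \<epsilon> * indicator S \<omega>"
      proof (cases "\<omega> \<in> S")
        case True
        then have "gk c \<xi> \<omega> + \<epsilon> \<le> gk c (\<psi> n) \<omega>" by (auto simp: S_def)
        then show ?thesis using True \<omega> by (simp add: gk_mix)
      next
        case False then show ?thesis using \<omega> by (simp add: gk_mix)
      qed
    qed
    also have "\<dots> = integral\<^sup>L M (gk c (\<psi> n)) - \<epsilon> * measure M S"
      using gk_int[of "\<psi> n" c] Sint S by simp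
    finally show ?thesis by simp
  qed
  then have "cc + \<epsilon> * measure M S \<le> cc" by (intro LIMSEQ_le_const[OF lim]) blast
  then have "\<epsilon> * measure M S \<le> 0" by simp
  then have "measure M S \<le> 0" using eps by (simp add: mult_le_0_iff)
  then have "measure M S = 0" using measure_nonneg[of M S] by linarith
  then have em: "emeasure M S = 0" using S by (simp add: emeasure_eq_measure)
  have eq: "{\<omega>\<in>space M. \<not> (\<exists>n. gk c (\<psi> n) \<omega> < gk c \<xi> \<omega> + \<epsilon>)} = S"
    unfolding S_def by (simp add: not_less)
  show ?thesis by (subst AE_iff_measurable[OF S eq]) (rule em)
qed

end

context setting
begin

lemma approx_D:
  fixes A :: "('w \<Rightarrow> 'e::{banach,second_countable_topology}) set" and \<phi> :: "nat \<Rightarrow> 'w \<Rightarrow> 'e"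
  assumes A: "A \<subseteq> Lp M p" and \<phi>: "\<And>j. \<phi> j \<in> clp M p (dec M A)" and \<eta>: "\<eta> \<in> Lp M p"
    and ae: "AE \<omega> in M. \<eta> \<omega> \<in> closure (range (\<lambda>j. \<phi> j \<omega>))" and \<delta>: "\<delta> > 0"
  shows "\<exists>\<theta>\<in>clp M p (dec M A). close \<theta> \<eta> \<delta>"
proof -
  have \<phi>L: "\<phi> j \<in> Lp M p" for j using \<phi> clp_Lp by blast
  have m\<phi>: "\<phi> j \<in> borel_measurable M" for j using \<phi>L Lp_meas by blast
  have m\<eta>: "\<eta> \<in> borel_measurable M" using \<eta> Lp_meas by blast
  define \<epsilon> where "\<epsilon> = (if p = 0 then \<delta> else (\<delta>/2) powr (1/p))"
  have \<epsilon>: "\<epsilon> > 0" using \<delta> by (simp add: \<epsilon>_def)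
  define C where "C j = {\<omega>\<in>space M. dist (\<eta> \<omega>) (\<phi> j \<omega>) < \<epsilon>}" for j
  have C: "C j \<in> sets M" for j unfolding C_def
    by (rule borel_measurable_less[OF borel_measurable_dist[OF m\<eta> m\<phi>] borel_measurable_const])
  define \<theta> where "\<theta> = rec_nat (\<phi> 0) (\<lambda>N t. mix (C N) (\<phi> N) t)"
  have \<theta>0: "\<theta> 0 = \<phi> 0" and \<theta>S: "\<theta> (Suc N) = mix (C N) (\<phi> N) (\<theta> N)" for N
    by (simp_all add: \<theta>_def)
  have \<theta>D: "\<theta> N \<in> clp M p (dec M A)" for N
  proof (induction N)
    case 0 then show ?case using \<phi> by (simp add: \<theta>0)
  next
    case (Suc N) then show ?case unfolding \<theta>S by (rule D_mix[OF A \<phi> _ C])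
  qed
  have \<theta>L: "\<theta> N \<in> Lp M p" for N using \<theta>D clp_Lp by blast
  define R where "R N = space M - (\<Union>j<N. C j)" for N
  have R: "R N \<in> sets M" for N unfolding R_def using C by auto
  have Rsp: "R N \<subseteq> space M" for N unfolding R_def by auto
  have pt: "(\<omega> \<notin> R N \<longrightarrow> dist (\<theta> N \<omega>) (\<eta> \<omega>) < \<epsilon>) \<and> (\<omega> \<in> R N \<longrightarrow> \<theta> N \<omega> = \<phi> 0 \<omega>)"
    if \<omega>: "\<omega> \<in> space M" for \<omega> N
  proof (induction N)
    case 0 then show ?case using \<omega> by (simp add: R_def \<theta>0)
  next
    case (Suc N)
    have RS: "R (Suc N) = R N - C N" unfolding R_def by (auto simp: lessThan_Suc)
    show ?case
    proof (cases "\<omega> \<in> C N")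
      case True
      then have "\<theta> (Suc N) \<omega> = \<phi> N \<omega>" using \<omega> by (simp add: \<theta>S mix_eval)
      moreover have "dist (\<phi> N \<omega>) (\<eta> \<omega>) < \<epsilon>" using True by (simp add: C_def dist_commute)
      ultimately show ?thesis using True RS by simp
    next
      case False
      then have "\<theta> (Suc N) \<omega> = \<theta> N \<omega>" using \<omega> by (simp add: \<theta>S mix_eval)
      moreover have "\<omega> \<in> R (Suc N) \<longleftrightarrow> \<omega> \<in> R N" using False RS by simp
      ultimately show ?thesis using Suc by simp
    qed
  qed
  have limR: "AE \<omega> in M. (\<lambda>N. indicator (R N) \<omega> :: real) \<longlonglongrightarrow> 0"
    using ae AE_space
  proof eventually_elim
    case (elim \<omega>)
    then obtain y where "y \<in> range (\<lambda>j. \<phi> j \<omega>)" "dist y (\<eta> \<omega>) < \<epsilon>"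
      using \<epsilon> unfolding closure_approachable by blast
    then obtain j where j: "dist (\<phi> j \<omega>) (\<eta> \<omega>) < \<epsilon>" by blast
    then have "\<omega> \<in> C j" using elim by (simp add: C_def dist_commute)
    then have "\<forall>N\<ge>Suc j. indicator (R N) \<omega> = (0::real)"
    proof (intro allI impI)
      fix N assume "Suc j \<le> N"
      then have "\<omega> \<in> (\<Union>j<N. C j)" using \<open>\<omega> \<in> C j\<close> by (intro UN_I[of j]) auto
      then show "indicator (R N) \<omega> = (0::real)" by (simp add: R_def)
    qed
    then show ?case by (intro tendsto_eventually) (auto simp: eventually_sequentially)
  qed
  show ?thesis
  proof (cases "p = 0")
    case True
    have "(\<lambda>N. integral\<^sup>L M (indicator (R N) :: 'w \<Rightarrow> real)) \<longlonglongrightarrow> integral\<^sup>L M (\<lambda>_. 0::real)"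
    proof (rule integral_dominated_convergence[where w="\<lambda>_. 1"])
      show "(\<lambda>_. 0::real) \<in> borel_measurable M" by simp
      show "indicator (R N) \<in> borel_measurable M" for N using R by simp
      show "integrable M (\<lambda>_. 1::real)" by simp
      show "AE x in M. (\<lambda>N. indicator (R N) x :: real) \<longlonglongrightarrow> 0" using limR .
      show "AE x in M. norm (indicator (R N) x :: real) \<le> 1" for N by (intro AE_I2) (simp add: indicator_def)
    qed
    then have "(\<lambda>N. measure M (R N)) \<longlonglongrightarrow> 0" using Rsp by (simp add: Int_absorb2)
    from order_tendstoD(2)[OF this \<delta>] obtain N where N: "measure M (R N) < \<delta>"
      by (auto simp: eventually_sequentially)
    have "measure M {\<omega>\<in>space M. norm (\<theta> N \<omega> - \<eta> \<omega>) > \<delta>} \<le> measure M (R N)"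
    proof (rule finite_measure_mono[OF _ R])
      show "{\<omega>\<in>space M. norm (\<theta> N \<omega> - \<eta> \<omega>) > \<delta>} \<subseteq> R N"
      proof
        fix \<omega> assume "\<omega> \<in> {\<omega>\<in>space M. norm (\<theta> N \<omega> - \<eta> \<omega>) > \<delta>}"
        then have \<omega>: "\<omega> \<in> space M" "norm (\<theta> N \<omega> - \<eta> \<omega>) > \<delta>" by auto
        show "\<omega> \<in> R N"
        proof (rule ccontr)
          assume "\<omega> \<notin> R N"
          then have "dist (\<theta> N \<omega>) (\<eta> \<omega>) < \<epsilon>" using pt[OF \<omega>(1)] by blast
          then show False using \<omega>(2) True by (simp add: \<epsilon>_def dist_norm)
        qed
      qed
    qed
    then have "close (\<theta> N) \<eta> \<delta>" using N by (simp add: close_0[OF True])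
    then show ?thesis using \<theta>D by blast
  next
    case False
    have p1: "p \<ge> 1" using pp False by auto
    define w where "w \<omega> = norm (\<phi> 0 \<omega> - \<eta> \<omega>) powr p" for \<omega>
    have wi: "integrable M w" unfolding w_def using Lp_diff_int[OF \<phi>L \<eta> False] .
    have wm: "w \<in> borel_measurable M" using wi by simp
    define s where "s N \<omega> = indicator (R N) \<omega> * w \<omega>" for N \<omega>
    have sm: "s N \<in> borel_measurable M" for N unfolding s_def using R wm by simp
    have sb: "AE x in M. norm (s N x) \<le> w x" for N
      by (intro AE_I2) (simp add: s_def w_def indicator_def)
    have slim: "AE x in M. (\<lambda>N. s N x) \<longlonglongrightarrow> 0"
      using limR by eventually_elim (auto simp: s_def intro: tendsto_mult_left_zero)
    have "(\<lambda>N. integral\<^sup>L M (s N)) \<longlonglongrightarrow> integral\<^sup>L M (\<lambda>_. 0::real)"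
      by (rule integral_dominated_convergence[OF _ sm wi slim sb]) simp
    then have "(\<lambda>N. integral\<^sup>L M (s N)) \<longlonglongrightarrow> 0" by simp
    from order_tendstoD(2)[OF this, of "\<delta>/2"] \<delta> obtain N where N: "integral\<^sup>L M (s N) < \<delta>/2"
      by (auto simp: eventually_sequentially)
    have si: "integrable M (s N)" by (rule integrable_dominated_convergence2[OF _ sm wi slim sb]) simp
    have ep: "\<epsilon> powr p = \<delta>/2" using False \<delta> by (simp add: \<epsilon>_def powr_powr)
    have "integral\<^sup>L M (\<lambda>\<omega>. norm (\<theta> N \<omega> - \<eta> \<omega>) powr p) \<le> integral\<^sup>L M (\<lambda>\<omega>. \<epsilon> powr p + s N \<omega>)"
    proof (rule integral_mono)
      show "integrable M (\<lambda>\<omega>. norm (\<theta> N \<omega> - \<eta> \<omega>) powr p)" using Lp_diff_int[OF \<theta>L \<eta> False] .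
      show "integrable M (\<lambda>\<omega>. \<epsilon> powr p + s N \<omega>)" using si by simp
      fix \<omega> assume \<omega>: "\<omega> \<in> space M"
      show "norm (\<theta> N \<omega> - \<eta> \<omega>) powr p \<le> \<epsilon> powr p + s N \<omega>"
      proof (cases "\<omega> \<in> R N")
        case True
        then have "\<theta> N \<omega> = \<phi> 0 \<omega>" using pt[OF \<omega>] by blast
        then show ?thesis using True by (simp add: s_def w_def)
      next
        case F: False
        then have "dist (\<theta> N \<omega>) (\<eta> \<omega>) < \<epsilon>" using pt[OF \<omega>] by blast
        then have "norm (\<theta> N \<omega> - \<eta> \<omega>) powr p \<le> \<epsilon> powr p"
          using p1 by (intro powr_mono2) (auto simp: dist_norm)
        then show ?thesis using F by (simp add: s_def)
      qed
    qed
    also have "\<dots> = \<epsilon> powr p + integral\<^sup>L M (s N)" using si by (simp add: prob_space)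
    also have "\<dots> \<le> \<delta>" using N ep by simp
    finally have "close (\<theta> N) \<eta> \<delta>" by (simp add: close_1[OF False])
    then show ?thesis using \<theta>D by blast
  qed
qed

lemma closure_in_D:
  fixes A :: "('w \<Rightarrow> 'e::{banach,second_countable_topology}) set" and \<phi> :: "nat \<Rightarrow> 'w \<Rightarrow> 'e"
  assumes A: "A \<subseteq> Lp M p" and \<phi>: "\<And>j. \<phi> j \<in> clp M p (dec M A)" and \<eta>: "\<eta> \<in> Lp M p"
    and ae: "AE \<omega> in M. \<eta> \<omega> \<in> closure (range (\<lambda>j. \<phi> j \<omega>))"
  shows "\<eta> \<in> clp M p (dec M A)"
proof -
  have "\<exists>\<theta>. \<theta> \<in> clp M p (dec M A) \<and> close \<theta> \<eta> (1 / (real m + 1))" for m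
    using approx_D[OF A \<phi> \<eta> ae, of "1 / (real m + 1)"] by auto
  then obtain Y where Y: "\<And>m. Y m \<in> clp M p (dec M A)" "\<And>m. close (Y m) \<eta> (1 / (real m + 1))" by metis
  have "conv_p M p Y \<eta>" by (rule close_conv[OF _ \<eta> Y(2)]) (use Y(1) clp_Lp in blast)
  then show ?thesis by (rule clp_closed[OF dec_Lp[OF A] Y(1) _ \<eta>])
qed

end

context setting
begin

lemma exists_F:
  fixes A :: "('w \<Rightarrow> 'e::{banach,second_countable_topology}) set"
  assumes A: "A \<subseteq> Lp M p" and Ane: "A \<noteq> {}"
  shows "\<exists>F. is_FA M p A F"
proof -
  define D where "D = clp M p (dec M A)"
  have Dne: "D \<noteq> {}" using A_sub_D[OF A] Ane unfolding D_def by blast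
  have DL: "D \<subseteq> Lp M p" unfolding D_def by (rule clp_Lp)
  obtain e :: "nat \<Rightarrow> 'e" where e: "\<forall>x r. r > 0 \<longrightarrow> (\<exists>i. dist x (e i) < r)"
    using dense_seq by blast
  define Eg where "Eg k \<xi> = integral\<^sup>L M (gk (e k) \<xi>)" for k \<xi>
  define c where "c k = Inf (Eg k ` D)" for k
  have Eg0: "0 \<le> Eg k \<xi>" for k \<xi> unfolding Eg_def by (intro integral_nonneg_AE AE_I2 gk_nonneg)
  have bdd: "bdd_below (Eg k ` D)" for k using Eg0 by (intro bdd_belowI[of _ 0]) auto
  have lb: "c k \<le> Eg k \<zeta>" if "\<zeta> \<in> D" for k \<zeta> unfolding c_def using bdd that by (intro cInf_lower) auto
  have "\<exists>\<xi>. \<xi> \<in> D \<and> Eg k \<xi> < c k + 1 / (real n + 1)" for k n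
  proof -
    have "Inf (Eg k ` D) < c k + 1 / (real n + 1)" unfolding c_def by (simp add: add_pos_pos)
    from cInf_lessD[OF _ this] Dne show ?thesis by auto
  qed
  then have "\<forall>k. \<exists>f. \<forall>n. f n \<in> D \<and> Eg k (f n) < c k + 1 / (real n + 1)" by (intro allI choice) blast
  then obtain \<psi> where \<psi>: "\<And>k n. \<psi> k n \<in> D" "\<And>k n. Eg k (\<psi> k n) < c k + 1 / (real n + 1)"
    by (metis (no_types))
  have \<psi>m: "\<psi> k n \<in> borel_measurable M" for k n using \<psi>(1) DL Lp_meas by blast
  have lim: "(\<lambda>n. Eg k (\<psi> k n)) \<longlonglongrightarrow> c k" for k
  proof (rule tendsto_sandwich[OF _ _ tendsto_const])
    show "\<forall>\<^sub>F n in sequentially. c k \<le> Eg k (\<psi> k n)" using lb \<psi>(1) by simp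
    show "\<forall>\<^sub>F n in sequentially. Eg k (\<psi> k n) \<le> c k + 1 / (real n + 1)" using \<psi>(2) by (intro always_eventually allI less_imp_le)
    have "(\<lambda>n. 1 / (real n + 1)) \<longlonglongrightarrow> 0"
      using LIMSEQ_inverse_real_of_nat by (simp add: inverse_eq_divide add.commute)
    then show "(\<lambda>n. c k + 1 / (real n + 1)) \<longlonglongrightarrow> c k" using tendsto_add[OF tendsto_const[of "c k"]] by fastforce
  qed
  define F where "F \<omega> = closure {\<psi> k n \<omega> | k n. True}" for \<omega>
  have crs: "closed_random_set M F"
    unfolding closed_random_set_def
  proof (intro conjI allI impI ballI)
    show "closed (F \<omega>)" for \<omega> by (simp add: F_def)
    fix U :: "'e set" assume U: "open U"
    have "{\<omega>\<in>space M. F \<omega> \<inter> U \<noteq> {}} = (\<Union>k. \<Union>n. \<psi> k n -` U \<inter> space M)"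
    proof -
      have "F \<omega> \<inter> U \<noteq> {} \<longleftrightarrow> (\<exists>k n. \<psi> k n \<omega> \<in> U)" for \<omega>
      proof -
        have "F \<omega> \<inter> U = {} \<longleftrightarrow> {\<psi> k n \<omega> | k n. True} \<inter> U = {}"
          using open_Int_closure_eq_empty[OF U, of "{\<psi> k n \<omega> | k n. True}"] unfolding F_def
          by (simp add: Int_commute)
        then show ?thesis by blast
      qed
      then show ?thesis by blast
    qed
    also have "\<dots> \<in> sets M"
    proof -
      have "\<psi> k n -` U \<inter> space M \<in> sets M" for k n by (rule measurable_sets[OF \<psi>m borel_open[OF U]])
      then have "(\<Union>n. \<psi> k n -` U \<inter> space M) \<in> sets M" for k by (intro sets.countable_UN) auto
      then show ?thesis by (intro sets.countable_UN) auto
    qed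
    finally show "{\<omega>\<in>space M. F \<omega> \<inter> U \<noteq> {}} \<in> sets M" .
  qed
  have "D = Lp_sel M p F"
  proof
    show "D \<subseteq> Lp_sel M p F"
    proof
      fix \<xi> assume \<xi>: "\<xi> \<in> D"
      have "AE \<omega> in M. \<exists>n. gk (e k) (\<psi> k n) \<omega> < gk (e k) \<xi> \<omega> + 1 / (real j + 1)" for k j
        by (rule essinf_claim[OF A \<psi>(1)[unfolded D_def] _ lim[unfolded Eg_def] \<xi>[unfolded D_def]])
           (use lb in \<open>auto simp: D_def Eg_def\<close>)
      then have "AE \<omega> in M. \<forall>k j. \<exists>n. gk (e k) (\<psi> k n) \<omega> < gk (e k) \<xi> \<omega> + 1 / (real j + 1)"
        by (simp add: AE_all_countable)
      then have "AE \<omega> in M. \<xi> \<omega> \<in> F \<omega>"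
      proof eventually_elim
        case (elim \<omega>)
        show ?case unfolding F_def
          by (rule closure_pt[OF e, of "\<lambda>k n. \<psi> k n \<omega>"]) (use elim in \<open>simp add: gk_def\<close>)
      qed
      then show "\<xi> \<in> Lp_sel M p F" using \<xi> DL by (auto simp: Lp_sel_def)
    qed
  next
    show "Lp_sel M p F \<subseteq> D"
    proof
      fix \<eta> assume "\<eta> \<in> Lp_sel M p F"
      then have \<eta>: "\<eta> \<in> Lp M p" and ae: "AE \<omega> in M. \<eta> \<omega> \<in> F \<omega>" by (auto simp: Lp_sel_def)
      define \<phi> where "\<phi> j = \<psi> (fst (prod_decode j)) (snd (prod_decode j))" for j
      have rg: "{\<psi> k n \<omega> | k n. True} = range (\<lambda>j. \<phi> j \<omega>)" for \<omega>
      proof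
        show "{\<psi> k n \<omega> | k n. True} \<subseteq> range (\<lambda>j. \<phi> j \<omega>)"
        proof
          fix x assume "x \<in> {\<psi> k n \<omega> | k n. True}"
          then obtain k n where "x = \<psi> k n \<omega>" by blast
          then have "x = \<phi> (prod_encode (k, n)) \<omega>" by (simp add: \<phi>_def)
          then show "x \<in> range (\<lambda>j. \<phi> j \<omega>)" by blast
        qed
        show "range (\<lambda>j. \<phi> j \<omega>) \<subseteq> {\<psi> k n \<omega> | k n. True}" unfolding \<phi>_def by blast
      qed
      have "AE \<omega> in M. \<eta> \<omega> \<in> closure (range (\<lambda>j. \<phi> j \<omega>))"
        using ae unfolding F_def rg by simp
      moreover have "\<phi> j \<in> clp M p (dec M A)" for j using \<psi>(1) by (simp add: \<phi>_def D_def)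
      ultimately show "\<eta> \<in> D" unfolding D_def using closure_in_D[OF A _ \<eta>] by blast
    qed
  qed
  then show ?thesis using crs unfolding is_FA_def D_def by blast
qed

end

definition goodG :: "'e::real_normed_vector \<Rightarrow> ('e \<times> real) set \<Rightarrow> bool" where
  "goodG d G \<longleftrightarrow> (\<forall>x a y b. (x,a)\<in>G \<longrightarrow> (y,b)\<in>G \<longrightarrow> (x+y,a+b)\<in>G) \<and>
     (\<forall>x a c. (x,a)\<in>G \<longrightarrow> (c *\<^sub>R x, c*a)\<in>G) \<and> (\<forall>x a. (x,a)\<in>G \<longrightarrow> a \<le> norm x) \<and>
     (d, norm d) \<in> G"

lemma goodG_add: "goodG d G \<Longrightarrow> (x,a)\<in>G \<Longrightarrow> (y,b)\<in>G \<Longrightarrow> (x+y,a+b)\<in>G"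
  unfolding goodG_def by blast
lemma goodG_scale: "goodG d G \<Longrightarrow> (x,a)\<in>G \<Longrightarrow> (c *\<^sub>R x, c*a)\<in>G"
  unfolding goodG_def by blast
lemma goodG_le: "goodG d G \<Longrightarrow> (x,a)\<in>G \<Longrightarrow> a \<le> norm x"
  unfolding goodG_def by blast
lemma goodG_d: "goodG d G \<Longrightarrow> (d, norm d)\<in>G"
  unfolding goodG_def by blast

lemma goodG_fun:
  assumes "goodG d G" "(x,a)\<in>G" "(x,b)\<in>G" shows "a = b"
proof -
  have "((-1) *\<^sub>R x, (-1)*b) \<in> G" using assms goodG_scale by blast
  then have "(x + (-1) *\<^sub>R x, a + (-1)*b) \<in> G" using assms goodG_add by blast
  then have "a - b \<le> 0" using assms goodG_le by fastforce
  moreover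
  have "((-1) *\<^sub>R x, (-1)*a) \<in> G" using assms goodG_scale by blast
  then have "(x + (-1) *\<^sub>R x, b + (-1)*a) \<in> G" using assms goodG_add by blast
  then have "b - a \<le> 0" using assms goodG_le by fastforce
  ultimately show ?thesis by simp
qed

lemma goodG_base: "goodG d {(t *\<^sub>R d, t * norm d) | t. True}"
  unfolding goodG_def
  apply (intro conjI allI impI)
     apply clarsimp apply (metis scaleR_left_distrib distrib_right)
    apply clarsimp apply (metis scaleR_scaleR mult.assoc)
   apply clarsimp apply (metis abs_ge_self mult_right_mono norm_ge_zero)
  apply (rule CollectI, rule exI[of _ 1], simp)
  done

lemma goodG_extend:
  fixes z :: "'e::real_normed_vector"
  assumes g: "goodG d G" and z: "\<forall>a. (z,a) \<notin> G"
  shows "\<exists>G'. goodG d G' \<and> G \<subseteq> G' \<and> G' \<noteq> G"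
proof -
  have zero: "(0,0) \<in> G" using goodG_scale[OF g goodG_d[OF g], of 0] by simp
  define S where "S = {a - norm (x - z) | x a. (x,a)\<in>G}"
  define c where "c = Sup S"
  have key: "a - norm (x - z) \<le> norm (y + z) - b" if "(x,a)\<in>G" "(y,b)\<in>G" for x a y b
  proof -
    have "(x+y, a+b) \<in> G" using goodG_add[OF g that] .
    then have "a + b \<le> norm (x+y)" using goodG_le[OF g] by blast
    also have "norm (x+y) \<le> norm (x - z) + norm (y + z)"
      using norm_triangle_ineq[of "x - z" "y + z"] by simp
    finally show ?thesis by simp
  qed
  have Sne: "S \<noteq> {}" using zero unfolding S_def by blast
  have Sbdd: "bdd_above S" unfolding S_def bdd_above_def using key zero by blast
  have c1: "a - norm (x - z) \<le> c" if "(x,a)\<in>G" for x a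
    unfolding c_def using Sbdd that by (intro cSup_upper) (auto simp: S_def)
  have c2: "c \<le> norm (y + z) - b" if "(y,b)\<in>G" for y b
    unfolding c_def using Sne that key by (intro cSup_least) (auto simp: S_def)
  define G' where "G' = {(x + t *\<^sub>R z, a + t * c) | x a t. (x,a)\<in>G}"
  have memG': "(u + t *\<^sub>R z, e + t * c) \<in> G'" if "(u,e)\<in>G" for u e t
    unfolding G'_def using that by blast
  have "goodG d G'"
    unfolding goodG_def
  proof (intro conjI allI impI)
    fix x a y b assume "(x,a)\<in>G'" "(y,b)\<in>G'"
    then obtain x1 a1 t1 x2 a2 t2 where "(x1,a1)\<in>G" "(x2,a2)\<in>G" "x = x1 + t1 *\<^sub>R z" "a = a1 + t1*c"
       "y = x2 + t2 *\<^sub>R z" "b = a2 + t2*c" unfolding G'_def by blast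
    moreover have "(x1+x2,a1+a2)\<in>G" using goodG_add[OF g] calculation by blast
    moreover have "(x+y,a+b) = ((x1+x2) + (t1+t2) *\<^sub>R z, (a1+a2) + (t1+t2)*c)"
      using calculation by (simp add: algebra_simps)
    ultimately show "(x+y,a+b)\<in>G'" using memG' by metis
  next
    fix x a r assume "(x,a)\<in>G'"
    then obtain x1 a1 t1 where "(x1,a1)\<in>G" "x = x1 + t1 *\<^sub>R z" "a = a1 + t1*c" unfolding G'_def by blast
    moreover have "(r *\<^sub>R x1, r*a1)\<in>G" using goodG_scale[OF g] calculation by blast
    moreover have "(r *\<^sub>R x, r*a) = (r *\<^sub>R x1 + (r*t1) *\<^sub>R z, r*a1 + (r*t1)*c)"
      using calculation by (simp add: algebra_simps)
    ultimately show "(r *\<^sub>R x, r*a)\<in>G'" using memG' by metis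
  next
    fix x a assume "(x,a)\<in>G'"
    then obtain x1 a1 t where xa: "(x1,a1)\<in>G" "x = x1 + t *\<^sub>R z" "a = a1 + t*c" unfolding G'_def by blast
    show "a \<le> norm x"
    proof (cases t "0::real" rule: linorder_cases)
      case equal then show ?thesis using xa goodG_le[OF g] by auto
    next
      case greater
      have "((1/t) *\<^sub>R x1, (1/t)*a1)\<in>G" using goodG_scale[OF g xa(1)] by blast
      from c2[OF this] have "c \<le> norm ((1/t) *\<^sub>R x1 + z) - a1/t" by simp
      also have "(1/t) *\<^sub>R x1 + z = (1/t) *\<^sub>R (x1 + t *\<^sub>R z)" using greater by (simp add: algebra_simps)
      finally have "t * c \<le> t * (norm ((1/t) *\<^sub>R (x1 + t *\<^sub>R z)) - a1/t)" using greater
        by (simp add: mult_left_mono)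
      also have "\<dots> = norm (x1 + t *\<^sub>R z) - a1"
      proof -
        have "norm ((1/t) *\<^sub>R (x1 + t *\<^sub>R z)) = norm (x1 + t *\<^sub>R z) / t" using greater by simp
        then show ?thesis using greater by (simp add: field_simps)
      qed
      finally show ?thesis using xa by simp
    next
      case less
      define s where "s = -t"
      have s: "s > 0" using less s_def by simp
      have "((1/s) *\<^sub>R x1, (1/s)*a1)\<in>G" using goodG_scale[OF g xa(1)] by blast
      from c1[OF this] have "a1/s - norm ((1/s) *\<^sub>R x1 - z) \<le> c" by simp
      also have "(1/s) *\<^sub>R x1 - z = (1/s) *\<^sub>R (x1 - s *\<^sub>R z)" using s by (simp add: algebra_simps)
      finally have "s * (a1/s - norm ((1/s) *\<^sub>R (x1 - s *\<^sub>R z))) \<le> s * c" using s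
        by (simp add: mult_left_mono)
      moreover have "s * (a1/s - norm ((1/s) *\<^sub>R (x1 - s *\<^sub>R z))) = a1 - norm (x1 - s *\<^sub>R z)"
      proof -
        have "norm ((1/s) *\<^sub>R (x1 - s *\<^sub>R z)) = norm (x1 - s *\<^sub>R z) / s" using s by simp
        then show ?thesis using s by (simp add: field_simps)
      qed
      ultimately show ?thesis using xa s_def by (simp add: algebra_simps)
    qed
  next
    show "(d, norm d) \<in> G'" using memG'[OF goodG_d[OF g], of 0] by simp
  qed
  moreover have "G \<subseteq> G'" using memG'[of _ _ 0] by auto
  moreover have "(z, c) \<in> G'" using memG'[OF zero, of 1] by simp
  ultimately show ?thesis using z by blast
qed

lemma hahn_banach_norming:
  fixes d :: "'e::real_normed_vector"
  shows "\<exists>L. bounded_linear L \<and> L d = norm d \<and> (\<forall>x. \<bar>L x\<bar> \<le> norm x)"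
proof -
  define A where "A = {G. goodG d G}"
  have "\<exists>M\<in>A. \<forall>X\<in>A. M \<subseteq> X \<longrightarrow> X = M"
  proof (rule Zorn_Lemma2, intro ballI)
    fix C assume C: "C \<in> chains A"
    show "\<exists>U\<in>A. \<forall>X\<in>C. X \<subseteq> U"
    proof (cases "C = {}")
      case True then show ?thesis using goodG_base[of d] unfolding A_def by blast
    next
      case False
      have CA: "C \<subseteq> A" using C unfolding chains_def by blast
      have ch: "X \<subseteq> Y \<or> Y \<subseteq> X" if "X\<in>C" "Y\<in>C" for X Y using chainsD[OF C that] .
      have "goodG d (\<Union>C)" unfolding goodG_def
      proof (intro conjI allI impI)
        fix x a y b assume "(x,a)\<in>\<Union>C" "(y,b)\<in>\<Union>C"
        then obtain X Y where "X\<in>C" "Y\<in>C" "(x,a)\<in>X" "(y,b)\<in>Y" by blast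
        then obtain Z where "Z\<in>C" "(x,a)\<in>Z" "(y,b)\<in>Z" using ch by blast
        then show "(x+y,a+b)\<in>\<Union>C" using CA goodG_add unfolding A_def by blast
      next
        fix x a r assume "(x,a)\<in>\<Union>C"
        then show "(r *\<^sub>R x, r*a)\<in>\<Union>C" using CA goodG_scale unfolding A_def by blast
      next
        fix x a assume "(x,a)\<in>\<Union>C"
        then show "a \<le> norm x" using CA goodG_le unfolding A_def by blast
      next
        show "(d, norm d)\<in>\<Union>C" using CA False goodG_d unfolding A_def by blast
      qed
      then show ?thesis unfolding A_def by blast
    qed
  qed
  then obtain G where G: "goodG d G" and max: "\<And>X. goodG d X \<Longrightarrow> G \<subseteq> X \<Longrightarrow> X = G"
    unfolding A_def by blast
  have tot: "\<exists>a. (x,a)\<in>G" for x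
  proof (rule ccontr)
    assume "\<nexists>a. (x, a) \<in> G"
    then obtain G' where "goodG d G'" "G \<subseteq> G'" "G' \<noteq> G" using goodG_extend[OF G] by blast
    then show False using max by blast
  qed
  define L where "L x = (THE a. (x,a)\<in>G)" for x
  have LG: "(x, L x) \<in> G" for x
    unfolding L_def using tot[of x] goodG_fun[OF G] by (metis theI)
  have Lval: "L x = a" if "(x,a)\<in>G" for x a using goodG_fun[OF G LG that] .
  have add: "L (x+y) = L x + L y" for x y
    using goodG_add[OF G LG[of x] LG[of y]] Lval by blast
  have scl: "L (r *\<^sub>R x) = r * L x" for r x
    using goodG_scale[OF G LG[of x]] Lval by blast
  have ub: "L x \<le> norm x" for x using goodG_le[OF G LG] by blast
  have bd: "\<bar>L x\<bar> \<le> norm x" for x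
    using ub[of x] ub[of "-x"] scl[of "-1" x] by auto
  have "bounded_linear L"
    by (rule bounded_linear_intro[where K=1]) (use add scl bd in auto)
  moreover have "L d = norm d" using goodG_d[OF G] Lval by blast
  ultimately show ?thesis using bd by blast
qed

lemma sep_functionals:
  "\<exists>L::nat \<Rightarrow> 'e::{real_normed_vector,second_countable_topology} \<Rightarrow> real.
     (\<forall>k. bounded_linear (L k)) \<and> (\<forall>v w. (\<forall>k. L k v = L k w) \<longrightarrow> v = w)"
proof -
  obtain e :: "nat \<Rightarrow> 'e" where e: "\<forall>x r. r > 0 \<longrightarrow> (\<exists>i. dist x (e i) < r)"
    using dense_seq by blast
  have "\<forall>k. \<exists>L. bounded_linear L \<and> L (e k) = norm (e k) \<and> (\<forall>x. \<bar>L x\<bar> \<le> norm x)"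
    using hahn_banach_norming by blast
  then obtain L where L: "\<And>k. bounded_linear (L k)" "\<And>k. L k (e k) = norm (e k)"
      "\<And>k x. \<bar>L k x\<bar> \<le> norm x"
    by metis
  have "v = w" if h: "\<forall>k. L k v = L k w" for v w
  proof (rule ccontr)
    assume "v \<noteq> w"
    define u where "u = v - w"
    have u: "norm u > 0" using \<open>v \<noteq> w\<close> by (simp add: u_def)
    then have "norm u / 3 > 0" by simp
    then obtain k where k: "dist u (e k) < norm u / 3" using e by blast
    have "L k u = L k v - L k w" unfolding u_def by (rule linear_diff[OF bounded_linear.linear[OF L(1)]])
    then have L0: "L k u = 0" using h by simp
    have "L k u = L k (e k) + L k (u - e k)"
    proof -
      have "L k (u - e k) = L k u - L k (e k)" by (rule linear_diff[OF bounded_linear.linear[OF L(1)]])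
      then show ?thesis by simp
    qed
    moreover have "\<bar>L k (u - e k)\<bar> \<le> norm (u - e k)" by (rule L(3))
    moreover have "norm u \<le> norm (e k) + norm (u - e k)" using norm_triangle_ineq[of "e k" "u - e k"] by simp
    moreover have "norm (u - e k) < norm u / 3" using k by (simp add: dist_norm)
    ultimately have "L k u > 0" using L(2)[of k] by linarith
    then show False using L0 by simp
  qed
  then show ?thesis using L(1) by blast
qed

lemma bl_meas: "bounded_linear L \<Longrightarrow> L \<in> borel_measurable borel"
  by (intro borel_measurable_continuous_onI linear_continuous_on)

context setting
begin

lemma Kdelta_return:
  fixes \<eta> :: "'w \<Rightarrow> 'e::{banach,second_countable_topology}"
  assumes \<eta>: "\<eta> \<in> Lp M p" and ae: "AE \<omega> in M. \<eta> \<omega> \<in> F \<omega>" and F: "closed_random_set M F"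
  shows "(\<lambda>\<omega>. return borel (\<eta> \<omega>)) \<in> Kdelta M p F \<and> barycenter M p (\<lambda>\<omega>. return borel (\<eta> \<omega>)) \<eta>"
proof -
  have bar: "barycenter M p (\<lambda>\<omega>. return borel (\<eta> \<omega>)) \<eta>"
    unfolding barycenter_def
  proof (intro conjI allI impI \<eta>)
    fix L :: "'e \<Rightarrow> real" assume L: "bounded_linear L"
    have Lm: "L \<in> borel_measurable borel" using bl_meas[OF L] .
    have "integrable (return borel x) L \<and> L x = integral\<^sup>L (return borel x) L" for x
    proof
      interpret R: prob_space "return borel x" by (rule prob_space_return) simp
      have "AE y in return borel x. norm (L y) \<le> norm (L x)"
        by (subst AE_return) (use Lm in auto)
      then show "integrable (return borel x) L"
        by (rule R.integrable_const_bound) (simp add: Lm)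
      show "L x = integral\<^sup>L (return borel x) L" by (simp add: integral_return Lm)
    qed
    then show "AE \<omega> in M. integrable (return borel (\<eta> \<omega>)) L \<and> L (\<eta> \<omega>) = integral\<^sup>L (return borel (\<eta> \<omega>)) L"
      by simp
  qed
  have meas: "(\<lambda>\<omega>. return borel (\<eta> \<omega>)) \<in> M \<rightarrow>\<^sub>M prob_algebra borel"
    by (rule measurable_compose[OF Lp_meas[OF \<eta>] measurable_return_prob_space])
  have "AE \<omega> in M. emeasure (return borel (\<eta> \<omega>)) (F \<omega>) = 1"
    using ae AE_space
  proof eventually_elim
    case (elim \<omega>)
    have "closed (F \<omega>)" using F elim by (simp add: closed_random_set_def)
    then have "F \<omega> \<in> sets borel" by simp
    then show ?case using elim by (simp add: emeasure_return)
  qed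
  then show ?thesis using meas bar unfolding Kdelta_def by auto
qed

lemma bary_dirac:
  fixes Y :: "'w \<Rightarrow> 'e::{banach,second_countable_topology}"
  assumes K: "K \<in> Kdelta M p F" and Y: "barycenter M p K Y" and F: "closed_random_set M F"
  shows "AE \<omega> in M. Y \<omega> \<in> F \<omega>"
proof -
  obtain L :: "nat \<Rightarrow> 'e \<Rightarrow> real" where L: "\<And>k. bounded_linear (L k)"
      "\<And>v w. (\<forall>k. L k v = L k w) \<Longrightarrow> v = w"
    using sep_functionals by metis
  have "AE \<omega> in M. integrable (K \<omega>) (L k) \<and> L k (Y \<omega>) = integral\<^sup>L (K \<omega>) (L k)" for k
    using Y L(1) unfolding barycenter_def by blast
  then have a1: "AE \<omega> in M. \<forall>k. L k (Y \<omega>) = integral\<^sup>L (K \<omega>) (L k)"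
    by (simp add: AE_all_countable)
  have a2: "AE \<omega> in M. emeasure (K \<omega>) (F \<omega>) = 1" and a3: "AE \<omega> in M. \<exists>x. K \<omega> = return borel x"
    using K unfolding Kdelta_def by auto
  show ?thesis
    using a1 a2 a3 AE_space
  proof eventually_elim
    case (elim \<omega>)
    then obtain x where x: "K \<omega> = return borel x" by blast
    have "L k (Y \<omega>) = L k x" for k
      using elim(1) x by (simp add: integral_return bl_meas[OF L(1)])
    then have "Y \<omega> = x" using L(2) by blast
    moreover have "closed (F \<omega>)" using F elim by (simp add: closed_random_set_def)
    then have "F \<omega> \<in> sets borel" by simp
    then have "x \<in> F \<omega>" using elim(2) x by (simp add: emeasure_return indicator_def split: if_splits)
    ultimately show ?case by simp
  qed
qed

end

context setting
begin

lemma ae_eq_trans: "ae_eq M f g \<Longrightarrow> ae_eq M g h \<Longrightarrow> ae_eq M f h"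
  unfolding ae_eq_def by (auto elim: AE_mp)

lemma dec_ae_aux:
  fixes A :: "('w \<Rightarrow> 'e::{banach,second_countable_topology}) set" and \<xi> :: "nat \<Rightarrow> 'w \<Rightarrow> 'e"
  assumes dA: "decomposable M A" and a: "a \<in> A"
  shows "(\<forall>i<m. \<xi> i \<in> A \<and> B i \<in> sets M) \<Longrightarrow> disjoint_family_on B {..<m} \<Longrightarrow>
    ae_mem M (\<lambda>\<omega>. (\<Sum>i<m. indicator (B i) \<omega> *\<^sub>R \<xi> i \<omega>) + indicator (space M - (\<Union>i<m. B i)) \<omega> *\<^sub>R a \<omega>) A"
proof (induction m)
  case 0
  have "ae_mem M (\<lambda>\<omega>. indicator (space M) \<omega> *\<^sub>R a \<omega> + indicator (space M - space M) \<omega> *\<^sub>R a \<omega>) A"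
    using dA a unfolding decomposable_def by blast
  then show ?case by simp
next
  case (Suc m)
  have h: "\<forall>i<m. \<xi> i \<in> A \<and> B i \<in> sets M" using Suc.prems(1) by simp
  have dj: "disjoint_family_on B {..<m}" using Suc.prems(2) by (rule disjoint_family_on_mono[rotated]) auto
  define T where "T = (\<lambda>\<omega>. (\<Sum>i<m. indicator (B i) \<omega> *\<^sub>R \<xi> i \<omega>) + indicator (space M - (\<Union>i<m. B i)) \<omega> *\<^sub>R a \<omega>)"
  obtain b where b: "b \<in> A" "ae_eq M T b" using Suc.IH[OF h dj] unfolding ae_mem_def T_def by blast
  have xm: "\<xi> m \<in> A" "B m \<in> sets M" using Suc.prems(1) by auto
  obtain c where c: "c \<in> A" "ae_eq M (\<lambda>\<omega>. indicator (B m) \<omega> *\<^sub>R \<xi> m \<omega> + indicator (space M - B m) \<omega> *\<^sub>R b \<omega>) c"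
    using dA xm b(1) unfolding decomposable_def ae_mem_def by blast
  have "ae_eq M (\<lambda>\<omega>. (\<Sum>i<Suc m. indicator (B i) \<omega> *\<^sub>R \<xi> i \<omega>) + indicator (space M - (\<Union>i<Suc m. B i)) \<omega> *\<^sub>R a \<omega>)
      (\<lambda>\<omega>. indicator (B m) \<omega> *\<^sub>R \<xi> m \<omega> + indicator (space M - B m) \<omega> *\<^sub>R b \<omega>)"
    unfolding ae_eq_def using b(2)[unfolded ae_eq_def] AE_space
  proof eventually_elim
    case (elim \<omega>)
    show ?case
    proof (cases "\<omega> \<in> B m")
      case True
      have z: "(\<Sum>i<m. indicator (B i) \<omega> *\<^sub>R \<xi> i \<omega>) = 0"
      proof (rule sum.neutral, intro ballI)
        fix i assume "i \<in> {..<m}"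
        then have "i \<in> {..<Suc m}" "m \<in> {..<Suc m}" "i \<noteq> m" by auto
        then have "B i \<inter> B m = {}" using Suc.prems(2) unfolding disjoint_family_on_def by blast
        then show "indicator (B i) \<omega> *\<^sub>R \<xi> i \<omega> = 0" using True by (auto simp: indicator_def)
      qed
      have "\<omega> \<in> (\<Union>i<Suc m. B i)" using True by auto
      moreover have "(\<Sum>i<Suc m. indicator (B i) \<omega> *\<^sub>R \<xi> i \<omega>) = \<xi> m \<omega>"
        by (subst sum.lessThan_Suc) (simp add: z True)
      ultimately show ?thesis using True by simp
    next
      case False
      have "\<omega> \<in> (\<Union>i<Suc m. B i) \<longleftrightarrow> \<omega> \<in> (\<Union>i<m. B i)" using False by (auto simp: lessThan_Suc)
      moreover have "(\<Sum>i<Suc m. indicator (B i) \<omega> *\<^sub>R \<xi> i \<omega>) = (\<Sum>i<m. indicator (B i) \<omega> *\<^sub>R \<xi> i \<omega>)"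
        by (subst sum.lessThan_Suc) (simp add: False)
      ultimately have "(\<Sum>i<Suc m. indicator (B i) \<omega> *\<^sub>R \<xi> i \<omega>) + indicator (space M - (\<Union>i<Suc m. B i)) \<omega> *\<^sub>R a \<omega> = T \<omega>"
        unfolding T_def by (simp add: indicator_def)
      then show ?thesis using False elim by simp
    qed
  qed
  then show ?case using c unfolding ae_mem_def by (blast intro: ae_eq_trans)
qed

lemma dec_ae:
  fixes A :: "('w \<Rightarrow> 'e::{banach,second_countable_topology}) set"
  assumes dA: "decomposable M A" and Ane: "A \<noteq> {}" and \<eta>: "\<eta> \<in> dec M A"
  shows "ae_mem M \<eta> A"
proof -
  obtain a where a: "a \<in> A" using Ane by blast
  obtain m :: nat and \<xi> B where h: "\<forall>i<m. \<xi> i \<in> A \<and> B i \<in> sets M" "disjoint_family_on B {..<m}"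
      "(\<Union>i<m. B i) = space M" "\<eta> = (\<lambda>\<omega>. \<Sum>i<m. indicator (B i) \<omega> *\<^sub>R \<xi> i \<omega>)"
    using \<eta> unfolding dec_def by blast
  have "ae_mem M (\<lambda>\<omega>. (\<Sum>i<m. indicator (B i) \<omega> *\<^sub>R \<xi> i \<omega>) + indicator (space M - (\<Union>i<m. B i)) \<omega> *\<^sub>R a \<omega>) A"
    by (rule dec_ae_aux[OF dA a h(1) h(2)])
  then show ?thesis using h(3,4) by simp
qed

lemma key_back:
  fixes A :: "('w \<Rightarrow> 'e::{banach,second_countable_topology}) set"
  assumes ch: "choquet_decomposable M p A" and F: "is_FA M p A F" and \<xi>: "\<xi> \<in> clp M p (dec M A)"
  shows "ae_mem M \<xi> A"
proof -
  have "\<xi> \<in> Lp_sel M p F" using F \<xi> unfolding is_FA_def by blast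
  then have \<xi>L: "\<xi> \<in> Lp M p" and ae: "AE \<omega> in M. \<xi> \<omega> \<in> F \<omega>" by (auto simp: Lp_sel_def)
  have crs: "closed_random_set M F" using F unfolding is_FA_def by blast
  from Kdelta_return[OF \<xi>L ae crs] ch F show ?thesis unfolding choquet_decomposable_def by blast
qed

lemma main_loc:
  fixes A :: "('w \<Rightarrow> 'e::{banach,second_countable_topology}) set"
  assumes Ane: "A \<noteq> {}" and A: "A \<subseteq> Lp M p"
  shows "choquet_decomposable M p A \<longleftrightarrow> decomposable M A \<and> strongly_closed M p A"
proof
  assume ch: "choquet_decomposable M p A"
  obtain F where F: "is_FA M p A F" using exists_F[OF A Ane] by blast
  have AD: "A \<subseteq> clp M p (dec M A)" using A_sub_D[OF A] .
  have "decomposable M A"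
    unfolding decomposable_def
  proof (intro ballI)
    fix \<xi> \<zeta> B assume "\<xi> \<in> A" "\<zeta> \<in> A" "B \<in> sets M"
    then have "mix B \<xi> \<zeta> \<in> clp M p (dec M A)" using AD by (intro D_mix[OF A]) auto
    then show "ae_mem M (\<lambda>\<omega>. indicator B \<omega> *\<^sub>R \<xi> \<omega> + indicator (space M - B) \<omega> *\<^sub>R \<zeta> \<omega>) A"
      using key_back[OF ch F] unfolding mix_def by blast
  qed
  moreover have "strongly_closed M p A"
    unfolding strongly_closed_def
  proof (intro conjI ballI)
    fix \<xi> assume "\<xi> \<in> A"
    then have "\<xi> \<in> clp M p A" using clp_self[OF A] by blast
    then show "ae_mem M \<xi> (clp M p A)" unfolding ae_mem_def ae_eq_def by auto
  next
    fix \<xi> assume \<xi>: "\<xi> \<in> clp M p A"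
    then obtain X where X: "\<And>n. X n \<in> A" "conv_p M p X \<xi>" and \<xi>L: "\<xi> \<in> Lp M p" by (auto simp: clp_def)
    have "\<xi> \<in> clp M p (dec M A)"
      by (rule clp_closed[OF dec_Lp[OF A] _ X(2) \<xi>L]) (use X(1) AD in blast)
    then show "ae_mem M \<xi> A" by (rule key_back[OF ch F])
  qed
  ultimately show "decomposable M A \<and> strongly_closed M p A" by blast
next
  assume "decomposable M A \<and> strongly_closed M p A"
  then have dA: "decomposable M A" and sc: "strongly_closed M p A" by auto
  have DA: "ae_mem M \<zeta> A" if \<zeta>: "\<zeta> \<in> clp M p (dec M A)" for \<zeta>
  proof -
    from \<zeta> obtain X where X: "\<And>n. X n \<in> dec M A" "conv_p M p X \<zeta>" and \<zeta>L: "\<zeta> \<in> Lp M p" by (auto simp: clp_def)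
    have "\<exists>z. z \<in> A \<and> ae_eq M (X n) z" for n using dec_ae[OF dA Ane X(1)[of n]] unfolding ae_mem_def by blast
    then obtain Z where Z: "\<And>n. Z n \<in> A" "\<And>n. ae_eq M (X n) (Z n)" by metis
    have "conv_p M p Z \<zeta>"
      by (rule conv_cong[OF _ _ _ \<zeta>L \<zeta>L _ X(2)]) (use X(1) dec_Lp[OF A] Z A in \<open>auto simp: ae_eq_def\<close>)
    then have "\<zeta> \<in> clp M p A" using Z(1) \<zeta>L by (auto simp: clp_def)
    then show ?thesis using sc unfolding strongly_closed_def by blast
  qed
  show "choquet_decomposable M p A"
    unfolding choquet_decomposable_def
  proof (intro allI impI ballI)
    fix F K Y assume F: "is_FA M p A F" and K: "K \<in> Kdelta M p F" and Y: "barycenter M p K Y"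
    have crs: "closed_random_set M F" using F unfolding is_FA_def by blast
    have "Y \<in> Lp_sel M p F" using bary_dirac[OF K Y crs] Y by (auto simp: Lp_sel_def barycenter_def)
    then have "Y \<in> clp M p (dec M A)" using F unfolding is_FA_def by blast
    then show "ae_mem M Y A" by (rule DA)
  qed
qed

end

theorem mainTheorem8:
  fixes M :: "'w measure" and p :: real
    and A :: "('w \<Rightarrow> 'e::{banach,second_countable_topology}) set"
  assumes "prob_space M" and "complete_measure M"
    and "p = 0 \<or> p \<ge> 1"
    and "A \<noteq> {}" and "A \<subseteq> Lp M p"
  shows "choquet_decomposable M p A \<longleftrightarrow> decomposable M A \<and> strongly_closed M p A"
proof -
  interpret S: setting M p using assms(1-3) by (simp add: setting_def setting_axioms_def)
  show ?thesis by (rule S.main_loc[OF assms(4,5)])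
qed

end
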